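(* Let $\Bbbk$ be an algebraically closed field of characteristic $2$ and let $\mathfrak{u}(\mathfrak{m})$ be the algebra generated by $a,b,c$ with relations $ab+ba=c$, $ac+ca=a$, $bc+cb=b$, $a^4=b^4=0$, $c^2+c=0$. The elements $e_0=(1+ab+a^2b^2)(1+c)$ and $e_1=(1+a^2b^2)c$ are idempotents of $\mathfrak{u}(\mathfrak{m})$, and $P(V_0)\simeq\mathfrak{u}(\mathfrak{m})e_0$, $P(V_1)\simeq\mathfrak{u}(\mathfrak{m})e_1$ as left $\mathfrak{u}(\mathfrak{m})$-modules.
   Context: $P(V)$ denotes the projective cover of $V$. $V_0$ is the one-dimensional module with $a,b,c$ acting by $0$; $V_1$ is the three-dimensional module with basis $v_1,v_2,v_3$, $av_1=v_2$, $av_2=v_3$, $av_3=0$, $bv_1=0$, $bv_2=v_1$, $bv_3=v_2$, $cv_1=v_1$, $cv_2=0$, $cv_3=v_3$. *)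

theory Defs
  imports "HOL-Computational_Algebra.Polynomial" "HOL-Library.Product_Plus" "HOL-Algebra.QuotRing" "HOL-Algebra.Module"

begin

datatype gen = GA | GB | GC

text \<open>Elements of the free associative algebra over 'k on a,b,c: finitely supported
  functions from words to coefficients; a word [g1,...,gn] is the monomial g1 g2 ... gn.\<close>
type_synonym 'k fw = "gen list \<Rightarrow> 'k"

definition FA :: "('k::field) fw ring" where
  "FA = \<lparr>carrier = {f. finite {w. f w \<noteq> 0}},
         mult = (\<lambda>f g w. \<Sum>i\<le>length w. f (take i w) * g (drop i w)),
         one = (\<lambda>w. if w = [] then 1 else 0),
         zero = (\<lambda>w. 0),
         add = (\<lambda>f g w. f w + g w)\<rparr>"

definition fa_scal :: "'k::field \<Rightarrow> 'k fw" where
  "fa_scal k = (\<lambda>w. if w = [] then k else 0)"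

definition fa_gen :: "gen \<Rightarrow> 'k::field fw" where
  "fa_gen g = (\<lambda>w. if w = [g] then 1 else 0)"

abbreviation "fa_a \<equiv> fa_gen GA"
abbreviation "fa_b \<equiv> fa_gen GB"
abbreviation "fa_c \<equiv> fa_gen GC"

definition um_rels :: "'k::field fw set" where
  "um_rels =
    { fa_a \<otimes>\<^bsub>FA\<^esub> fa_b \<oplus>\<^bsub>FA\<^esub> fa_b \<otimes>\<^bsub>FA\<^esub> fa_a \<oplus>\<^bsub>FA\<^esub> fa_scal (-1) \<otimes>\<^bsub>FA\<^esub> fa_c,
      fa_a \<otimes>\<^bsub>FA\<^esub> fa_c \<oplus>\<^bsub>FA\<^esub> fa_c \<otimes>\<^bsub>FA\<^esub> fa_a \<oplus>\<^bsub>FA\<^esub> fa_scal (-1) \<otimes>\<^bsub>FA\<^esub> fa_a,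
      fa_b \<otimes>\<^bsub>FA\<^esub> fa_c \<oplus>\<^bsub>FA\<^esub> fa_c \<otimes>\<^bsub>FA\<^esub> fa_b \<oplus>\<^bsub>FA\<^esub> fa_scal (-1) \<otimes>\<^bsub>FA\<^esub> fa_b,
      fa_a \<otimes>\<^bsub>FA\<^esub> fa_a \<otimes>\<^bsub>FA\<^esub> fa_a \<otimes>\<^bsub>FA\<^esub> fa_a,
      fa_b \<otimes>\<^bsub>FA\<^esub> fa_b \<otimes>\<^bsub>FA\<^esub> fa_b \<otimes>\<^bsub>FA\<^esub> fa_b,
      fa_c \<otimes>\<^bsub>FA\<^esub> fa_c \<oplus>\<^bsub>FA\<^esub> fa_c }"

definition um_ideal :: "'k::field fw set" where
  "um_ideal = genideal FA um_rels"

definition um :: "('k::field fw) set ring" where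
  "um = FA Quot um_ideal"

definition um_cls :: "'k::field fw \<Rightarrow> 'k fw set" where
  "um_cls f = um_ideal +>\<^bsub>FA\<^esub> f"

definition um_a :: "'k::field fw set" where "um_a = um_cls fa_a"
definition um_b :: "'k::field fw set" where "um_b = um_cls fa_b"
definition um_c :: "'k::field fw set" where "um_c = um_cls fa_c"

definition um_e0 :: "'k::field fw set" where
  "um_e0 = (\<one>\<^bsub>um\<^esub> \<oplus>\<^bsub>um\<^esub> um_a \<otimes>\<^bsub>um\<^esub> um_b
              \<oplus>\<^bsub>um\<^esub> um_a \<otimes>\<^bsub>um\<^esub> um_a \<otimes>\<^bsub>um\<^esub> um_b \<otimes>\<^bsub>um\<^esub> um_b)
           \<otimes>\<^bsub>um\<^esub> (\<one>\<^bsub>um\<^esub> \<oplus>\<^bsub>um\<^esub> um_c)"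

definition um_e1 :: "'k::field fw set" where
  "um_e1 = (\<one>\<^bsub>um\<^esub> \<oplus>\<^bsub>um\<^esub> um_a \<otimes>\<^bsub>um\<^esub> um_a \<otimes>\<^bsub>um\<^esub> um_b \<otimes>\<^bsub>um\<^esub> um_b)
           \<otimes>\<^bsub>um\<^esub> um_c"

definition lmodule :: "('a, 'c) ring_scheme \<Rightarrow> ('a, 'b) module \<Rightarrow> bool" where
  "lmodule R M \<longleftrightarrow> ring R \<and> abelian_group M \<and>
     (\<forall>a\<in>carrier R. \<forall>x\<in>carrier M. a \<odot>\<^bsub>M\<^esub> x \<in> carrier M) \<and>
     (\<forall>a\<in>carrier R. \<forall>b\<in>carrier R. \<forall>x\<in>carrier M.
        (a \<oplus>\<^bsub>R\<^esub> b) \<odot>\<^bsub>M\<^esub> x = a \<odot>\<^bsub>M\<^esub> x \<oplus>\<^bsub>M\<^esub> b \<odot>\<^bsub>M\<^esub> x) \<and>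
     (\<forall>a\<in>carrier R. \<forall>x\<in>carrier M. \<forall>y\<in>carrier M.
        a \<odot>\<^bsub>M\<^esub> (x \<oplus>\<^bsub>M\<^esub> y) = a \<odot>\<^bsub>M\<^esub> x \<oplus>\<^bsub>M\<^esub> a \<odot>\<^bsub>M\<^esub> y) \<and>
     (\<forall>a\<in>carrier R. \<forall>b\<in>carrier R. \<forall>x\<in>carrier M.
        (a \<otimes>\<^bsub>R\<^esub> b) \<odot>\<^bsub>M\<^esub> x = a \<odot>\<^bsub>M\<^esub> (b \<odot>\<^bsub>M\<^esub> x)) \<and>
     (\<forall>x\<in>carrier M. \<one>\<^bsub>R\<^esub> \<odot>\<^bsub>M\<^esub> x = x)"

definition mod_hom :: "('a, 'c) ring_scheme \<Rightarrow> ('a, 'b) module \<Rightarrow> ('a, 'd) module \<Rightarrow> ('b \<Rightarrow> 'd) set" where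
  "mod_hom R M N = {f. f \<in> carrier M \<rightarrow> carrier N \<and>
     (\<forall>x\<in>carrier M. \<forall>y\<in>carrier M. f (x \<oplus>\<^bsub>M\<^esub> y) = f x \<oplus>\<^bsub>N\<^esub> f y) \<and>
     (\<forall>r\<in>carrier R. \<forall>x\<in>carrier M. f (r \<odot>\<^bsub>M\<^esub> x) = r \<odot>\<^bsub>N\<^esub> f x)}"

definition submodule :: "('a, 'c) ring_scheme \<Rightarrow> 'b set \<Rightarrow> ('a, 'b) module \<Rightarrow> bool" where
  "submodule R L M \<longleftrightarrow> L \<subseteq> carrier M \<and> \<zero>\<^bsub>M\<^esub> \<in> L \<and>
     (\<forall>x\<in>L. \<forall>y\<in>L. x \<oplus>\<^bsub>M\<^esub> y \<in> L) \<and> (\<forall>x\<in>L. \<ominus>\<^bsub>M\<^esub> x \<in> L) \<and>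
     (\<forall>r\<in>carrier R. \<forall>x\<in>L. r \<odot>\<^bsub>M\<^esub> x \<in> L)"

text \<open>The
  modules tested against live in an arbitrary type 'n; since the theorem is stated for an
  arbitrary (universally quantified) type 'n, this is projectivity in the usual sense.\<close>
definition projective :: "('a, 'c) ring_scheme \<Rightarrow> ('a, 'b) module \<Rightarrow> 'n itself \<Rightarrow> bool" where
  "projective R P _ \<longleftrightarrow> lmodule R P \<and>
     (\<forall>(N :: ('a, 'n) module) (N' :: ('a, 'n) module) g h.
        lmodule R N \<and> lmodule R N' \<and> g \<in> mod_hom R N N' \<and> g ` carrier N = carrier N' \<and>
        h \<in> mod_hom R P N' \<longrightarrow> (\<exists>f\<in>mod_hom R P N. \<forall>x\<in>carrier P. g (f x) = h x))"

definition essential_epi :: "('a, 'c) ring_scheme \<Rightarrow> ('b \<Rightarrow> 'd) \<Rightarrow> ('a, 'b) module \<Rightarrow> ('a, 'd) module \<Rightarrow> bool" where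
  "essential_epi R \<pi> P V \<longleftrightarrow> \<pi> \<in> mod_hom R P V \<and> \<pi> ` carrier P = carrier V \<and>
     (\<forall>L. submodule R L P \<and>
          {l \<oplus>\<^bsub>P\<^esub> k | l k. l \<in> L \<and> k \<in> carrier P \<and> \<pi> k = \<zero>\<^bsub>V\<^esub>} = carrier P
          \<longrightarrow> L = carrier P)"

text \<open>P is a projective cover of V (so P is isomorphic to P(V)).\<close>
definition projective_cover :: "('a, 'c) ring_scheme \<Rightarrow> ('a, 'b) module \<Rightarrow> ('a, 'd) module \<Rightarrow> 'n itself \<Rightarrow> bool" where
  "projective_cover R P V T \<longleftrightarrow> projective R P T \<and> lmodule R V \<and> (\<exists>\<pi>. essential_epi R \<pi> P V)"

definition left_ideal_mod :: "('a, 'c) ring_scheme \<Rightarrow> 'a \<Rightarrow> ('a, 'a) module" where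
  "left_ideal_mod R e = \<lparr>carrier = {x \<otimes>\<^bsub>R\<^esub> e | x. x \<in> carrier R}, mult = mult R, one = one R,
     zero = zero R, add = add R, smult = mult R\<rparr>"

definition rep_eval :: "('k \<Rightarrow> 'v \<Rightarrow> 'v) \<Rightarrow> (gen \<Rightarrow> 'v \<Rightarrow> 'v) \<Rightarrow> 'k::field fw \<Rightarrow> 'v::ab_group_add \<Rightarrow> 'v" where
  "rep_eval sm \<rho> f v = (\<Sum>w\<in>{w. f w \<noteq> 0}. sm (f w) (foldr \<rho> w v))"

text \<open>The u(m)-module on the k-space V in which the class of f acts as f(a,b,c) evaluated
  at the given operators (independent of the representative since the relations hold).\<close>
definition rep_mod :: "('k \<Rightarrow> 'v \<Rightarrow> 'v) \<Rightarrow> (gen \<Rightarrow> 'v \<Rightarrow> 'v) \<Rightarrow> ('k::field fw set, 'v::ab_group_add) module" where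
  "rep_mod sm \<rho> = \<lparr>carrier = UNIV, mult = (\<lambda>_ _. 0), one = 0, zero = 0, add = (+),
     smult = (\<lambda>x v. rep_eval sm \<rho> (SOME f. f \<in> x) v)\<rparr>"

definition V0 :: "('k::field fw set, 'k) module" where
  "V0 = rep_mod (\<lambda>k x. k * x) (\<lambda>g x. 0)"

text \<open>V1: three-dimensional with basis v1,v2,v3; (x,y,z) = x v1 + y v2 + z v3.
  a v1 = v2, a v2 = v3, a v3 = 0; b v1 = 0, b v2 = v1, b v3 = v2; c v1 = v1, c v2 = 0, c v3 = v3.\<close>
fun V1_act :: "gen \<Rightarrow> 'k::field \<times> 'k \<times> 'k \<Rightarrow> 'k \<times> 'k \<times> 'k" where
  "V1_act GA (x, y, z) = (0, x, y)"
| "V1_act GB (x, y, z) = (y, z, 0)"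
| "V1_act GC (x, y, z) = (x, 0, z)"

definition V1 :: "('k::field fw set, 'k \<times> 'k \<times> 'k) module" where
  "V1 = rep_mod (\<lambda>k (x, y, z). (k * x, k * y, k * z)) V1_act"

end

theory Submission
  imports Defs
begin


lemma FA_simps[simp]: "carrier FA = {f. finite {w. f w \<noteq> 0}}"
  "mult FA f g = (\<lambda>w. \<Sum>i\<le>length w. f (take i w) * g (drop i w))"
  "one FA = (\<lambda>w. if w = [] then 1 else 0)"
  "zero FA = (\<lambda>w. 0)"
  "add FA f g = (\<lambda>w. f w + g w)"
  by (simp_all add: FA_def)

lemma conv_assoc:
  fixes f g h :: "'k::field fw"
  shows "(\<Sum>i\<le>length w. (\<Sum>j\<le>length (take i w). f (take j (take i w)) * g (drop j (take i w))) * h (drop i w))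
       = (\<Sum>j\<le>length w. f (take j w) * (\<Sum>k\<le>length (drop j w). g (take k (drop j w)) * h (drop k (drop j w))))"
proof -
  let ?n = "length w"
  define F where "F j k = f (take j w) * g (take k (drop j w)) * h (drop (j + k) w)" for j k
  have L: "(\<Sum>i\<le>?n. (\<Sum>j\<le>length (take i w). f (take j (take i w)) * g (drop j (take i w))) * h (drop i w))
      = (\<Sum>i\<le>?n. \<Sum>j\<le>i. F j (i - j))"
  proof (rule sum.cong[OF refl])
    fix i assume "i \<in> {..?n}"
    then have i: "i \<le> ?n" by simp
    show "(\<Sum>j\<le>length (take i w). f (take j (take i w)) * g (drop j (take i w))) * h (drop i w) = (\<Sum>j\<le>i. F j (i - j))"
      unfolding sum_distrib_right
      by (rule sum.cong) (use i in \<open>auto simp: F_def min_def take_drop\<close>)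
  qed
  have R: "(\<Sum>j\<le>?n. f (take j w) * (\<Sum>k\<le>length (drop j w). g (take k (drop j w)) * h (drop k (drop j w))))
      = (\<Sum>j\<le>?n. \<Sum>k\<le>?n - j. F j k)"
    unfolding sum_distrib_left
    by (rule sum.cong[OF refl], rule sum.cong) (auto simp: F_def mult.assoc add.commute)
  have "(\<Sum>i\<le>?n. \<Sum>j\<le>i. F j (i - j)) = (\<Sum>(j,k)\<in>{(j,k). j + k \<le> ?n}. F j k)"
    by (rule sum.triangle_reindex_eq[symmetric])
  also have "\<dots> = (\<Sum>j\<le>?n. \<Sum>k\<le>?n - j. F j k)"
  proof -
    have "{(j,k). j + k \<le> ?n} = Sigma {..?n} (\<lambda>j. {..?n - j})" by auto
    then show ?thesis by (simp add: sum.Sigma)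
  qed
  finally show ?thesis using L R by simp
qed

lemma supp_mult_fin:
  fixes f g :: "'k::field fw"
  assumes "finite {w. f w \<noteq> 0}" "finite {w. g w \<noteq> 0}"
  shows "finite {w. (\<Sum>i\<le>length w. f (take i w) * g (drop i w)) \<noteq> 0}"
proof -
  have "{w. (\<Sum>i\<le>length w. f (take i w) * g (drop i w)) \<noteq> 0}
     \<subseteq> (\<lambda>(u,v). u @ v) ` ({w. f w \<noteq> 0} \<times> {w. g w \<noteq> 0})"
  proof
    fix w assume "w \<in> {w. (\<Sum>i\<le>length w. f (take i w) * g (drop i w)) \<noteq> 0}"
    then obtain i where "f (take i w) * g (drop i w) \<noteq> 0"
      by (auto elim: sum.not_neutral_contains_not_neutral)
    then show "w \<in> (\<lambda>(u,v). u @ v) ` ({w. f w \<noteq> 0} \<times> {w. g w \<noteq> 0})"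
      by (auto intro!: image_eqI[of _ _ "(take i w, drop i w)"])
  qed
  then show ?thesis by (rule finite_subset) (use assms in auto)
qed

lemma sum_one_left:
  fixes g :: "'k::field fw"
  shows "(\<Sum>i\<le>length w. (if take i w = [] then 1 else 0) * g (drop i w)) = g w"
proof -
  have "(\<Sum>i\<le>length w. (if take i w = [] then 1 else 0) * g (drop i w))
      = (\<Sum>i\<le>length w. if i = 0 then g w else 0)"
    by (rule sum.cong) (auto simp: take_eq_Nil)
  also have "\<dots> = g w" by simp
  finally show ?thesis .
qed

lemma sum_one_right:
  fixes g :: "'k::field fw"
  shows "(\<Sum>i\<le>length w. g (take i w) * (if drop i w = [] then 1 else 0)) = g w"
proof -
  have "(\<Sum>i\<le>length w. g (take i w) * (if drop i w = [] then 1 else 0))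
      = (\<Sum>i\<le>length w. if i = length w then g w else 0)"
    by (rule sum.cong) auto
  also have "\<dots> = g w" by simp
  finally show ?thesis .
qed

lemma ring_FA: "ring (FA :: 'k::field fw ring)"
proof (rule ringI)
  show "abelian_group (FA :: 'k fw ring)"
  proof (rule abelian_groupI)
    fix x y :: "'k fw" assume "x \<in> carrier FA" "y \<in> carrier FA"
    then show "x \<oplus>\<^bsub>FA\<^esub> y \<in> carrier FA"
      by (auto intro: finite_subset[of _ "{w. x w \<noteq> 0} \<union> {w. y w \<noteq> 0}"])
  next
    fix x :: "'k fw" assume "x \<in> carrier FA"
    then show "\<exists>y\<in>carrier FA. y \<oplus>\<^bsub>FA\<^esub> x = \<zero>\<^bsub>FA\<^esub>"
      by (intro bexI[of _ "\<lambda>w. - x w"]) auto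
  qed (auto simp: add.assoc add.commute)
  show "monoid (FA :: 'k fw ring)"
  proof (rule monoidI)
    fix x y :: "'k fw" assume "x \<in> carrier FA" "y \<in> carrier FA"
    then show "x \<otimes>\<^bsub>FA\<^esub> y \<in> carrier FA" by (simp add: supp_mult_fin)
  next
    show "\<one>\<^bsub>FA\<^esub> \<in> carrier (FA :: 'k fw ring)"
      by (auto intro: finite_subset[of _ "{[]}"])
  next
    fix x y z :: "'k fw"
    show "x \<otimes>\<^bsub>FA\<^esub> y \<otimes>\<^bsub>FA\<^esub> z = x \<otimes>\<^bsub>FA\<^esub> (y \<otimes>\<^bsub>FA\<^esub> z)"
      by (simp only: FA_simps) (rule ext, rule conv_assoc)
  next
    fix x :: "'k fw"
    show "\<one>\<^bsub>FA\<^esub> \<otimes>\<^bsub>FA\<^esub> x = x"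
      by (simp only: FA_simps) (rule ext, rule sum_one_left)
    show "x \<otimes>\<^bsub>FA\<^esub> \<one>\<^bsub>FA\<^esub> = x"
      by (simp only: FA_simps) (rule ext, rule sum_one_right)
  qed
next
  fix x y z :: "'k fw"
  show "(x \<oplus>\<^bsub>FA\<^esub> y) \<otimes>\<^bsub>FA\<^esub> z = x \<otimes>\<^bsub>FA\<^esub> z \<oplus>\<^bsub>FA\<^esub> y \<otimes>\<^bsub>FA\<^esub> z"
    by (simp add: distrib_right sum.distrib)
  show "z \<otimes>\<^bsub>FA\<^esub> (x \<oplus>\<^bsub>FA\<^esub> y) = z \<otimes>\<^bsub>FA\<^esub> x \<oplus>\<^bsub>FA\<^esub> z \<otimes>\<^bsub>FA\<^esub> y"
    by (simp add: distrib_left sum.distrib)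
qed


declare FA_simps[simp del]

lemma fa_gen_carr[simp]: "(fa_gen g :: 'k::field fw) \<in> carrier FA"
  unfolding fa_gen_def by (auto simp: FA_simps intro: finite_subset[of _ "{[g]}"])
lemma fa_scal_carr[simp]: "(fa_scal k :: 'k::field fw) \<in> carrier FA"
  unfolding fa_scal_def by (auto simp: FA_simps intro: finite_subset[of _ "{[]}"])

lemma um_rels_carr: "(um_rels :: 'k::field fw set) \<subseteq> carrier FA"
proof -
  interpret ring "FA :: 'k fw ring" by (rule ring_FA)
  show ?thesis unfolding um_rels_def by simp
qed

lemma ideal_um: "ideal (um_ideal :: 'k::field fw set) FA"
  unfolding um_ideal_def by (rule ring.genideal_ideal[OF ring_FA um_rels_carr])

lemma ring_um: "ring (um :: 'k::field fw set ring)"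
  unfolding um_def by (rule ideal.quotient_is_ring[OF ideal_um])

lemma hom_um: "(um_cls :: 'k::field fw \<Rightarrow> _) \<in> ring_hom FA um"
proof -
  have "((+>\<^bsub>FA\<^esub>) (um_ideal :: 'k fw set)) \<in> ring_hom FA um"
    unfolding um_def by (rule ideal.rcos_ring_hom[OF ideal_um])
  moreover have "um_cls = ((+>\<^bsub>FA\<^esub>) (um_ideal :: 'k fw set))"
    by (rule ext) (simp add: um_cls_def)
  ultimately show ?thesis by simp
qed

lemma carrier_um: "carrier (um :: 'k::field fw set ring) = um_cls ` carrier FA"
  by (auto simp: um_def um_cls_def FactRing_def A_RCOSETS_def')

lemma zero_um: "\<zero>\<^bsub>um\<^esub> = (um_ideal :: 'k::field fw set)"
  by (simp add: um_def FactRing_def)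

lemma cls_ideal: "(f :: 'k::field fw) \<in> um_ideal \<Longrightarrow> um_cls f = \<zero>\<^bsub>um\<^esub>"
  unfolding zero_um um_cls_def
  by (rule ring.a_rcos_zero[OF ring_FA ideal_um])

lemma rels_ideal: "(um_rels :: 'k::field fw set) \<subseteq> um_ideal"
  unfolding um_ideal_def by (rule ring.genideal_self[OF ring_FA um_rels_carr])

lemma cls_closed[simp]: "(f :: 'k::field fw) \<in> carrier FA \<Longrightarrow> um_cls f \<in> carrier um"
  using carrier_um by blast
lemma cls_mult: "(f :: 'k::field fw) \<in> carrier FA \<Longrightarrow> g \<in> carrier FA \<Longrightarrow> um_cls (f \<otimes>\<^bsub>FA\<^esub> g) = um_cls f \<otimes>\<^bsub>um\<^esub> um_cls g"
  by (rule ring_hom_mult[OF hom_um])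
lemma cls_add: "(f :: 'k::field fw) \<in> carrier FA \<Longrightarrow> g \<in> carrier FA \<Longrightarrow> um_cls (f \<oplus>\<^bsub>FA\<^esub> g) = um_cls f \<oplus>\<^bsub>um\<^esub> um_cls g"
  by (rule ring_hom_add[OF hom_um])
lemma cls_one: "um_cls \<one>\<^bsub>FA\<^esub> = (\<one>\<^bsub>um\<^esub> :: 'k::field fw set)"
  by (rule ring_hom_one[OF hom_um])
lemma cls_zero: "um_cls \<zero>\<^bsub>FA\<^esub> = (\<zero>\<^bsub>um\<^esub> :: 'k::field fw set)"
  by (rule ring_hom_zero[OF hom_um ring_FA ring_um])

lemma scal_mult_left: "fa_scal k \<otimes>\<^bsub>FA\<^esub> f = (\<lambda>w. k * f w)"
proof (rule ext)
  fix w :: "gen list"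
  have "(\<Sum>i\<le>length w. fa_scal k (take i w) * f (drop i w)) = (\<Sum>i\<le>length w. if i = 0 then k * f w else 0)"
    by (rule sum.cong) (auto simp: fa_scal_def take_eq_Nil)
  then show "(fa_scal k \<otimes>\<^bsub>FA\<^esub> f) w = k * f w" by (simp add: FA_simps)
qed

lemma scal_mult_right: "f \<otimes>\<^bsub>FA\<^esub> fa_scal k = (\<lambda>w. f w * k)"
proof (rule ext)
  fix w :: "gen list"
  have "(\<Sum>i\<le>length w. f (take i w) * fa_scal k (drop i w)) = (\<Sum>i\<le>length w. if i = length w then f w * k else 0)"
    by (rule sum.cong) (auto simp: fa_scal_def)
  then show "(f \<otimes>\<^bsub>FA\<^esub> fa_scal k) w = f w * k" by (simp add: FA_simps)
qed

lemma scal_central: "fa_scal k \<otimes>\<^bsub>FA\<^esub> f = f \<otimes>\<^bsub>FA\<^esub> fa_scal k"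
  by (simp add: scal_mult_left scal_mult_right mult.commute)

lemma scal_add: "fa_scal (k + l) = fa_scal k \<oplus>\<^bsub>FA\<^esub> fa_scal l"
  by (rule ext) (simp add: fa_scal_def FA_simps)
lemma scal_mult: "fa_scal (k * l) = fa_scal k \<otimes>\<^bsub>FA\<^esub> fa_scal l"
  by (simp add: scal_mult_left) (rule ext, simp add: fa_scal_def FA_simps)
lemma scal_one: "fa_scal 1 = \<one>\<^bsub>FA\<^esub>"
  by (rule ext) (simp add: fa_scal_def FA_simps)
lemma scal_zero: "fa_scal 0 = \<zero>\<^bsub>FA\<^esub>"
  by (rule ext) (simp add: fa_scal_def FA_simps)

definition fa_word :: "gen list \<Rightarrow> 'k::field fw" where
  "fa_word w = (\<lambda>u. if u = w then 1 else 0)"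

lemma fa_word_carr[simp]: "(fa_word w :: 'k::field fw) \<in> carrier FA"
  unfolding fa_word_def by (auto simp: FA_simps intro: finite_subset[of _ "{w}"])

lemma fa_word_Nil: "fa_word [] = \<one>\<^bsub>FA\<^esub>"
  by (rule ext) (simp add: fa_word_def FA_simps)

lemma take_drop_single:
  assumes "i \<le> length u"
  shows "(take i u = [g] \<and> drop i u = w) \<longleftrightarrow> (i = 1 \<and> u = g # w)"
proof
  assume H: "take i u = [g] \<and> drop i u = w"
  then have "length (take i u) = 1" by simp
  then have i1: "i = 1" using assms by simp
  have "u = take i u @ drop i u" by simp
  then have "u = g # w" using H by simp
  then show "i = 1 \<and> u = g # w" using i1 by simp
next
  assume "i = 1 \<and> u = g # w"
  then show "take i u = [g] \<and> drop i u = w" by simp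
qed

lemma fa_word_Cons: "fa_word (g # w) = fa_gen g \<otimes>\<^bsub>FA\<^esub> fa_word w"
proof (rule ext)
  fix u :: "gen list"
  have "(\<Sum>i\<le>length u. fa_gen g (take i u) * fa_word w (drop i u)) = (\<Sum>i\<in>{..length u}. if i = 1 \<and> u = g # w then 1 else 0)"
  proof (rule sum.cong[OF refl])
    fix i assume "i \<in> {..length u}"
    then have "i \<le> length u" by simp
    from take_drop_single[OF this, of g w]
    show "fa_gen g (take i u) * fa_word w (drop i u) = (if i = 1 \<and> u = g # w then 1 else 0)"
      unfolding fa_gen_def fa_word_def by auto
  qed
  also have "\<dots> = fa_word (g # w) u"
  proof (cases "u = g # w")
    case False then show ?thesis by (simp add: fa_word_def)
  next
    case True
    then have "(1::nat) \<in> {..length u}" by simp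
    then show ?thesis using True by (auto simp: fa_word_def) (cases w; simp)
  qed
  finally show "fa_word (g # w) u = (fa_gen g \<otimes>\<^bsub>FA\<^esub> fa_word w) u" unfolding FA_simps by (rule sym)
qed


typedef (overloaded) ('k::field) umt = "carrier (um :: 'k fw set ring)"
  morphisms Rp Ab
  using ring.ring_simprules(2)[OF ring_um] by blast

interpretation U: ring "um :: ('k::field) fw set ring" by (rule ring_um)

instantiation umt :: (field) "{ring, monoid_mult}"
begin
definition zero_umt_def: "0 = Ab \<zero>\<^bsub>um\<^esub>"
definition one_umt_def: "1 = Ab \<one>\<^bsub>um\<^esub>"
definition plus_umt_def: "x + y = Ab (Rp x \<oplus>\<^bsub>um\<^esub> Rp y)"
definition times_umt_def: "x * y = Ab (Rp x \<otimes>\<^bsub>um\<^esub> Rp y)"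
definition uminus_umt_def: "- x = Ab (\<ominus>\<^bsub>um\<^esub> Rp x)"
definition minus_umt_def: "x - y = Ab (Rp x \<ominus>\<^bsub>um\<^esub> Rp y)"

lemma Rp_c[simp]: "Rp x \<in> carrier um" using Rp by blast
lemma Rp_zero: "Rp 0 = \<zero>\<^bsub>um\<^esub>" by (simp add: zero_umt_def Ab_inverse)
lemma Rp_one: "Rp 1 = \<one>\<^bsub>um\<^esub>" by (simp add: one_umt_def Ab_inverse)
lemma Rp_add: "Rp (x + y) = Rp x \<oplus>\<^bsub>um\<^esub> Rp y" by (simp add: plus_umt_def Ab_inverse)
lemma Rp_mult: "Rp (x * y) = Rp x \<otimes>\<^bsub>um\<^esub> Rp y" by (simp add: times_umt_def Ab_inverse)
lemma Rp_uminus: "Rp (- x) = \<ominus>\<^bsub>um\<^esub> Rp x" by (simp add: uminus_umt_def Ab_inverse)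
lemma Rp_minus: "Rp (x - y) = Rp x \<ominus>\<^bsub>um\<^esub> Rp y" by (simp add: minus_umt_def Ab_inverse)

lemmas Rp_ops = Rp_zero Rp_one Rp_add Rp_mult Rp_uminus Rp_minus

instance
proof
  fix a b c :: "'a umt"
  show "a + b + c = a + (b + c)" by (simp add: Rp_inject[symmetric] Rp_ops U.a_assoc)
  show "a + b = b + a" by (simp add: Rp_inject[symmetric] Rp_ops U.a_comm)
  show "0 + a = a" by (simp add: Rp_inject[symmetric] Rp_ops)
  show "- a + a = 0" by (simp add: Rp_inject[symmetric] Rp_ops U.l_neg)
  show "a - b = a + - b" by (simp add: Rp_inject[symmetric] Rp_ops U.minus_eq)
  show "a * b * c = a * (b * c)" by (simp add: Rp_inject[symmetric] Rp_ops U.m_assoc)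
  show "(a + b) * c = a * c + b * c" by (simp add: Rp_inject[symmetric] Rp_ops U.l_distr)
  show "a * (b + c) = a * b + a * c" by (simp add: Rp_inject[symmetric] Rp_ops U.r_distr)
  show "1 * a = a" by (simp add: Rp_inject[symmetric] Rp_ops)
  show "a * 1 = a" by (simp add: Rp_inject[symmetric] Rp_ops)
qed
end


interpretation F: ring "FA :: ('k::field) fw ring" by (rule ring_FA)

definition ucls :: "'k::field fw \<Rightarrow> 'k umt" where "ucls f = Ab (um_cls f)"

lemma Rp_ucls: "f \<in> carrier FA \<Longrightarrow> Rp (ucls f) = um_cls f"
  by (simp add: ucls_def Ab_inverse)

lemma ucls_mult: "f \<in> carrier FA \<Longrightarrow> g \<in> carrier FA \<Longrightarrow> ucls (f \<otimes>\<^bsub>FA\<^esub> g) = ucls f * ucls g"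
  by (simp add: Rp_inject[symmetric] Rp_ops Rp_ucls cls_mult)
lemma ucls_add: "f \<in> carrier FA \<Longrightarrow> g \<in> carrier FA \<Longrightarrow> ucls (f \<oplus>\<^bsub>FA\<^esub> g) = ucls f + ucls g"
  by (simp add: Rp_inject[symmetric] Rp_ops Rp_ucls cls_add)
lemma ucls_one: "ucls \<one>\<^bsub>FA\<^esub> = 1"
  by (simp add: Rp_inject[symmetric] Rp_ops Rp_ucls cls_one)
lemma ucls_zero: "ucls \<zero>\<^bsub>FA\<^esub> = 0"
  by (simp add: Rp_inject[symmetric] Rp_ops Rp_ucls cls_zero)
lemma ucls_ideal: "f \<in> um_ideal \<Longrightarrow> ucls f = 0"
  by (simp add: ucls_def cls_ideal zero_umt_def)
lemma ucls_surj: "\<exists>f \<in> carrier FA. x = ucls f"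
proof -
  have "Rp x \<in> um_cls ` carrier FA" using Rp_c carrier_um by blast
  then obtain f where "f \<in> carrier FA" "Rp x = um_cls f" by blast
  then show ?thesis by (metis Rp_inverse ucls_def)
qed

definition scu :: "'k::field \<Rightarrow> 'k umt" where "scu k = ucls (fa_scal k)"

lemma scu_add: "scu (k + l) = scu k + scu l"
  by (simp add: scu_def scal_add ucls_add)
lemma scu_mult: "scu (k * l) = scu k * scu l"
  by (simp add: scu_def scal_mult ucls_mult)
lemma scu_one: "scu 1 = 1"
  by (simp add: scu_def scal_one ucls_one)
lemma scu_zero: "scu 0 = 0"
  by (simp add: scu_def scal_zero ucls_zero)
lemma scu_comm: "scu k * x = x * scu k"
proof -
  obtain f where f: "f \<in> carrier FA" "x = ucls f" using ucls_surj by blast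
  then show ?thesis by (simp add: scu_def flip: ucls_mult) (simp add: scal_central)
qed

definition "uA = ucls fa_a"
definition "uB = ucls fa_b"
definition "uC = ucls fa_c"

definition uword :: "gen list \<Rightarrow> 'k::field umt" where "uword w = ucls (fa_word w)"
definition ugen :: "gen \<Rightarrow> 'k::field umt" where "ugen g = ucls (fa_gen g)"

lemma uword_Nil: "uword [] = 1"
  by (simp add: uword_def fa_word_Nil ucls_one)
lemma uword_Cons: "uword (g # w) = ugen g * uword w"
  by (simp add: uword_def ugen_def fa_word_Cons ucls_mult)

lemma umt_span_induct:
  fixes x :: "'k::field umt"
  assumes P0: "P 0" and Padd: "\<And>x y. P x \<Longrightarrow> P y \<Longrightarrow> P (x + y)"
    and Pw: "\<And>k w. P (scu k * uword w)"
  shows "P x"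
proof -
  have main: "\<forall>f. f \<in> carrier FA \<longrightarrow> {w. f w \<noteq> 0} \<subseteq> S \<longrightarrow> P (ucls f)" if "finite S" for S
    using that
  proof (induction S rule: finite_induct)
    case empty
    show ?case
    proof (intro allI impI)
      fix f :: "'k fw" assume "f \<in> carrier FA" "{w. f w \<noteq> 0} \<subseteq> {}"
      then have "f = \<zero>\<^bsub>FA\<^esub>" by (auto simp: FA_simps)
      then show "P (ucls f)" using P0 by (simp add: ucls_zero)
    qed
  next
    case (insert w S)
    show ?case
    proof (intro allI impI)
      fix f :: "'k fw" assume f: "f \<in> carrier FA" "{w. f w \<noteq> 0} \<subseteq> insert w S"
      define g where "g = f(w := 0)"
      have gsupp: "{w. g w \<noteq> 0} \<subseteq> S" using f(2) by (auto simp: g_def)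
      have gc: "g \<in> carrier FA" using gsupp insert(1) by (auto simp: FA_simps intro: finite_subset)
      have feq: "f = g \<oplus>\<^bsub>FA\<^esub> (fa_scal (f w) \<otimes>\<^bsub>FA\<^esub> fa_word w)"
        by (simp only: scal_mult_left) (rule ext, simp add: FA_simps fa_word_def g_def)
      have "ucls f = ucls g + scu (f w) * uword w"
        by (subst feq) (simp add: ucls_add ucls_mult gc scu_def uword_def)
      moreover have "P (ucls g)" using insert(3) gc gsupp by blast
      ultimately show "P (ucls f)" using Padd Pw by simp
    qed
  qed
  obtain f where f: "f \<in> carrier FA" "x = ucls f" using ucls_surj by blast
  then have "finite {w. f w \<noteq> 0}" by (simp add: FA_simps)
  then show ?thesis using main f by blast
qed

lemma char2: "CHAR('k::field) = 2 \<Longrightarrow> (1::'k) + 1 = 0"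
  by (metis of_nat_CHAR one_add_one of_nat_numeral)

lemma char2_rel:
  fixes x y z :: "'r::{ring, monoid_mult}"
  assumes two: "1 + 1 = (0::'r)" and h: "x + y + z = 0"
  shows "y = x + z"
proof -
  have neg: "- w = w" for w :: 'r
  proof -
    have "w + w = 0" by (metis distrib_right mult_1_left two mult_zero_left)
    then show ?thesis by (metis add_eq_0_iff2 add.commute)
  qed
  have "y = - (x + z)" using h by (metis add.commute add.left_commute add_eq_0_iff2)
  then show ?thesis using neg by simp
qed

lemma rel_vals:
  "uA * uB + uB * uA + scu (-1) * uC = (0 :: 'k::field umt)"
  "uA * uC + uC * uA + scu (-1) * uA = (0 :: 'k::field umt)"
  "uB * uC + uC * uB + scu (-1) * uB = (0 :: 'k::field umt)"
  "uA * uA * uA * uA = (0 :: 'k::field umt)"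
  "uB * uB * uB * uB = (0 :: 'k::field umt)"
  "uC * uC + uC = (0 :: 'k::field umt)"
proof -
  have r: "\<And>r. r \<in> um_rels \<Longrightarrow> ucls r = (0 :: 'k umt)"
    using rels_ideal ucls_ideal by blast
  show "uA * uB + uB * uA + scu (-1) * uC = (0 :: 'k::field umt)"
    using r[of "fa_a \<otimes>\<^bsub>FA\<^esub> fa_b \<oplus>\<^bsub>FA\<^esub> fa_b \<otimes>\<^bsub>FA\<^esub> fa_a \<oplus>\<^bsub>FA\<^esub> fa_scal (-1) \<otimes>\<^bsub>FA\<^esub> fa_c"]
    by (simp add: um_rels_def ucls_add ucls_mult uA_def uB_def uC_def scu_def)
  show "uA * uC + uC * uA + scu (-1) * uA = (0 :: 'k::field umt)"
    using r[of "fa_a \<otimes>\<^bsub>FA\<^esub> fa_c \<oplus>\<^bsub>FA\<^esub> fa_c \<otimes>\<^bsub>FA\<^esub> fa_a \<oplus>\<^bsub>FA\<^esub> fa_scal (-1) \<otimes>\<^bsub>FA\<^esub> fa_a"]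
    by (simp add: um_rels_def ucls_add ucls_mult uA_def uB_def uC_def scu_def)
  show "uB * uC + uC * uB + scu (-1) * uB = (0 :: 'k::field umt)"
    using r[of "fa_b \<otimes>\<^bsub>FA\<^esub> fa_c \<oplus>\<^bsub>FA\<^esub> fa_c \<otimes>\<^bsub>FA\<^esub> fa_b \<oplus>\<^bsub>FA\<^esub> fa_scal (-1) \<otimes>\<^bsub>FA\<^esub> fa_b"]
    by (simp add: um_rels_def ucls_add ucls_mult uA_def uB_def uC_def scu_def)
  show "uA * uA * uA * uA = (0 :: 'k::field umt)"
    using r[of "fa_a \<otimes>\<^bsub>FA\<^esub> fa_a \<otimes>\<^bsub>FA\<^esub> fa_a \<otimes>\<^bsub>FA\<^esub> fa_a"]
    by (simp add: um_rels_def ucls_add ucls_mult uA_def uB_def uC_def scu_def)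
  show "uB * uB * uB * uB = (0 :: 'k::field umt)"
    using r[of "fa_b \<otimes>\<^bsub>FA\<^esub> fa_b \<otimes>\<^bsub>FA\<^esub> fa_b \<otimes>\<^bsub>FA\<^esub> fa_b"]
    by (simp add: um_rels_def ucls_add ucls_mult uA_def uB_def uC_def scu_def)
  show "uC * uC + uC = (0 :: 'k::field umt)"
    using r[of "fa_c \<otimes>\<^bsub>FA\<^esub> fa_c \<oplus>\<^bsub>FA\<^esub> fa_c"]
    by (simp add: um_rels_def ucls_add ucls_mult uA_def uB_def uC_def scu_def)
qed

lemma umt_two: "CHAR('k::field) = 2 \<Longrightarrow> (1::'k umt) + 1 = 0"
proof -
  assume "CHAR('k) = 2"
  then have "(1::'k) + 1 = 0" by (rule char2)
  then have "scu ((1::'k) + 1) = scu 0" by simp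
  then show ?thesis by (simp only: scu_add scu_one scu_zero)
qed

lemma scu_m1: "CHAR('k::field) = 2 \<Longrightarrow> scu (-1::'k) = 1"
proof -
  assume "CHAR('k) = 2"
  then have h: "(1::'k) + 1 = 0" by (rule char2)
  have "(1::'k) = - 1" using h by (simp only: add_eq_0_iff2)
  then have "(-1::'k) = 1" by (rule sym)
  then show ?thesis by (simp only: scu_one)
qed


locale repn =
  fixes sm :: "'k::field \<Rightarrow> 'v::ab_group_add \<Rightarrow> 'v" and rho :: "gen \<Rightarrow> 'v \<Rightarrow> 'v"
  assumes sm_addk: "sm (k + l) v = sm k v + sm l v"
  and sm_addv: "sm k (v + w) = sm k v + sm k w"
  and sm_mult: "sm (k * l) v = sm k (sm l v)"
  and sm_one: "sm 1 v = v"
  and rho_add: "rho g (v + w) = rho g v + rho g w"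
  and rho_sm: "rho g (sm k v) = sm k (rho g v)"
begin

lemma sm_zero_k[simp]: "sm 0 v = 0"
  using sm_addk[of 0 0 v] by simp
lemma sm_zero_v[simp]: "sm k 0 = 0"
  using sm_addv[of k 0 0] by simp
lemma rho_zero[simp]: "rho g 0 = 0"
  using rho_add[of g 0 0] by simp

lemma Rw_add: "foldr rho w (v + v') = foldr rho w v + foldr rho w v'"
  by (induction w) (simp_all add: rho_add)
lemma Rw_zero[simp]: "foldr rho w 0 = 0"
  by (induction w) simp_all
lemma Rw_sm: "foldr rho w (sm k v) = sm k (foldr rho w v)"
  by (induction w) (simp_all add: rho_sm)
lemma Rw_sum: "foldr rho w (\<Sum>x\<in>S. F x) = (\<Sum>x\<in>S. foldr rho w (F x))"
  using sum_comp_morphism[of "foldr rho w" F S, OF Rw_zero Rw_add] by (simp add: comp_def)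
lemma sm_sum_v: "sm k (\<Sum>x\<in>S. F x) = (\<Sum>x\<in>S. sm k (F x))"
  using sum_comp_morphism[of "sm k" F S, OF sm_zero_v sm_addv] by (simp add: comp_def)
lemma sm_sum_k: "sm (\<Sum>x\<in>S. F x) v = (\<Sum>x\<in>S. sm (F x) v)"
  using sum_comp_morphism[of "\<lambda>k. sm k v" F S, OF sm_zero_k sm_addk] by (simp add: comp_def)

lemma re_sub: "finite S \<Longrightarrow> {w. f w \<noteq> 0} \<subseteq> S \<Longrightarrow> rep_eval sm rho f v = (\<Sum>w\<in>S. sm (f w) (foldr rho w v))"
  unfolding rep_eval_def by (rule sum.mono_neutral_left) auto

lemma re_add:
  assumes "finite {w. f w \<noteq> 0}" "finite {w. g w \<noteq> 0}"
  shows "rep_eval sm rho (\<lambda>w. f w + g w) v = rep_eval sm rho f v + rep_eval sm rho g v"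
proof -
  let ?S = "{w. f w \<noteq> 0} \<union> {w. g w \<noteq> 0}"
  have fin: "finite ?S" using assms by simp
  have "rep_eval sm rho (\<lambda>w. f w + g w) v = (\<Sum>w\<in>?S. sm (f w + g w) (foldr rho w v))"
    by (rule re_sub[OF fin]) auto
  also have "\<dots> = (\<Sum>w\<in>?S. sm (f w) (foldr rho w v)) + (\<Sum>w\<in>?S. sm (g w) (foldr rho w v))"
    by (simp add: sm_addk sum.distrib)
  also have "\<dots> = rep_eval sm rho f v + rep_eval sm rho g v"
    by (simp add: re_sub[OF fin])
  finally show ?thesis .
qed

lemma re_vadd: "rep_eval sm rho f (v + v') = rep_eval sm rho f v + rep_eval sm rho f v'"
  unfolding rep_eval_def by (simp add: Rw_add sm_addv sum.distrib)

lemma re_vzero: "rep_eval sm rho f 0 = 0"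
  unfolding rep_eval_def by simp

lemma re_one: "rep_eval sm rho (\<lambda>w. if w = [] then 1 else 0) v = v"
proof -
  have "rep_eval sm rho (\<lambda>w. if w = [] then 1 else 0) v = (\<Sum>w\<in>{[]}. sm (if w = [] then 1 else 0) (foldr rho w v))"
    by (rule re_sub) auto
  then show ?thesis by (simp add: sm_one)
qed

lemma re_gen: "rep_eval sm rho (fa_gen g) v = rho g v"
proof -
  have "rep_eval sm rho (fa_gen g) v = (\<Sum>w\<in>{[g]}. sm (fa_gen g w) (foldr rho w v))"
    by (rule re_sub) (auto simp: fa_gen_def)
  then show ?thesis by (simp add: sm_one fa_gen_def)
qed

lemma re_scal: "rep_eval sm rho (fa_scal k) v = sm k v"
proof -
  have "rep_eval sm rho (fa_scal k) v = (\<Sum>w\<in>{[]}. sm (fa_scal k w) (foldr rho w v))"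
    by (rule re_sub) (auto simp: fa_scal_def)
  then show ?thesis by (simp add: fa_scal_def)
qed

lemma re_mult:
  assumes ff: "finite {w. f w \<noteq> 0}" and fg: "finite {w. g w \<noteq> 0}"
  shows "rep_eval sm rho (\<lambda>w. \<Sum>i\<le>length w. f (take i w) * g (drop i w)) v = rep_eval sm rho f (rep_eval sm rho g v)"
proof -
  define Sf where "Sf = {w. f w \<noteq> 0}"
  define Sg where "Sg = {w. g w \<noteq> 0}"
  define S where "S = (\<lambda>(u,x). u @ x) ` (Sf \<times> Sg)"
  define T where "T u x = sm (f u) (foldr rho u (sm (g x) (foldr rho x v)))" for u x
  define h where "h = (\<lambda>(w::gen list, i::nat). (take i w, drop i w))"
  define SS where "SS = Sigma S (\<lambda>w. {..length w})"
  have finS: "finite S" using ff fg by (simp add: S_def Sf_def Sg_def)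
  have finSS: "finite SS" using finS by (simp add: SS_def)
  have supp: "{w. (\<Sum>i\<le>length w. f (take i w) * g (drop i w)) \<noteq> 0} \<subseteq> S"
  proof
    fix w assume "w \<in> {w. (\<Sum>i\<le>length w. f (take i w) * g (drop i w)) \<noteq> 0}"
    then obtain i where "f (take i w) * g (drop i w) \<noteq> 0"
      by (auto elim: sum.not_neutral_contains_not_neutral)
    then show "w \<in> S"
      by (auto simp: S_def Sf_def Sg_def intro!: image_eqI[of _ _ "(take i w, drop i w)"])
  qed
  have termeq: "sm (f (take i w) * g (drop i w)) (foldr rho w v) = T (take i w) (drop i w)" for i w
  proof -
    have "foldr rho w v = foldr rho (take i w) (foldr rho (drop i w) v)"
      by (metis append_take_drop_id foldr_append comp_apply)
    then show ?thesis by (simp add: T_def sm_mult Rw_sm)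
  qed
  have "rep_eval sm rho (\<lambda>w. \<Sum>i\<le>length w. f (take i w) * g (drop i w)) v
      = (\<Sum>w\<in>S. sm (\<Sum>i\<le>length w. f (take i w) * g (drop i w)) (foldr rho w v))"
    by (rule re_sub[OF finS supp])
  also have "\<dots> = (\<Sum>w\<in>S. \<Sum>i\<le>length w. T (take i w) (drop i w))"
    by (simp add: sm_sum_k termeq)
  also have "\<dots> = (\<Sum>p\<in>SS. T (take (snd p) (fst p)) (drop (snd p) (fst p)))"
    by (simp add: SS_def sum.Sigma[OF finS] split_def)
  also have "\<dots> = (\<Sum>q\<in>h ` SS. T (fst q) (snd q))"
  proof -
    have "inj_on h SS"
    proof (rule inj_onI)
      fix p q assume p: "p \<in> SS" and q: "q \<in> SS" and hpq: "h p = h q"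
      obtain w i where pw: "p = (w, i)" by (cases p)
      obtain w' i' where qw: "q = (w', i')" by (cases q)
      have e1: "take i w = take i' w'" "drop i w = drop i' w'" using hpq pw qw by (simp_all add: h_def)
      then have ww: "w = w'" by (metis append_take_drop_id)
      have "i \<le> length w" "i' \<le> length w'" using p q pw qw by (auto simp: SS_def)
      then have "i = i'" using e1 ww by (metis length_take min.absorb2)
      then show "p = q" using pw qw ww by simp
    qed
    then show ?thesis by (simp add: sum.reindex h_def split_def)
  qed
  also have "\<dots> = (\<Sum>q\<in>Sf \<times> Sg. T (fst q) (snd q))"
  proof (rule sum.mono_neutral_right)
    show "finite (h ` SS)" using finSS by simp
    show "Sf \<times> Sg \<subseteq> h ` SS"
    proof
      fix q assume q: "q \<in> Sf \<times> Sg"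
      obtain u x where qq: "q = (u, x)" by (cases q)
      have "(u @ x, length u) \<in> SS" using q qq by (auto simp: SS_def S_def)
      moreover have "h (u @ x, length u) = q" using qq by (simp add: h_def)
      ultimately show "q \<in> h ` SS" by force
    qed
    show "\<forall>q\<in>h ` SS - Sf \<times> Sg. T (fst q) (snd q) = 0"
    proof (intro ballI)
      fix q assume "q \<in> h ` SS - Sf \<times> Sg"
      then have "q \<notin> Sf \<times> Sg" by blast
      then have "f (fst q) = 0 \<or> g (snd q) = 0" by (cases q) (auto simp: Sf_def Sg_def)
      then show "T (fst q) (snd q) = 0" by (auto simp: T_def)
    qed
  qed
  also have "\<dots> = (\<Sum>u\<in>Sf. \<Sum>x\<in>Sg. T u x)"
    by (simp add: sum.cartesian_product split_def)
  also have "\<dots> = rep_eval sm rho f (rep_eval sm rho g v)"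
    by (simp add: rep_eval_def Sf_def Sg_def T_def Rw_sum sm_sum_v)
  finally show ?thesis .
qed


lemma re_FAadd: "f \<in> carrier FA \<Longrightarrow> g \<in> carrier FA \<Longrightarrow>
    rep_eval sm rho (f \<oplus>\<^bsub>FA\<^esub> g) v = rep_eval sm rho f v + rep_eval sm rho g v"
  by (simp add: FA_simps re_add)
lemma re_FAmult: "f \<in> carrier FA \<Longrightarrow> g \<in> carrier FA \<Longrightarrow>
    rep_eval sm rho (f \<otimes>\<^bsub>FA\<^esub> g) v = rep_eval sm rho f (rep_eval sm rho g v)"
  by (simp add: FA_simps re_mult)
lemma re_FAone: "rep_eval sm rho \<one>\<^bsub>FA\<^esub> v = v"
  by (simp add: FA_simps re_one)
lemma re_FAzero: "rep_eval sm rho \<zero>\<^bsub>FA\<^esub> v = 0"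
  by (simp add: FA_simps rep_eval_def)

definition Zset :: "'k fw set" where
  "Zset = {f \<in> carrier FA. \<forall>v. rep_eval sm rho f v = 0}"

lemma Zset_ideal: "ideal Zset FA"
proof (rule idealI[OF ring_FA])
  show "subgroup Zset (add_monoid FA)"
  proof (rule F.add.subgroupI)
    show "Zset \<subseteq> carrier FA" by (auto simp: Zset_def)
    show "Zset \<noteq> {}" using re_FAzero by (auto simp: Zset_def intro!: exI[of _ "\<zero>\<^bsub>FA\<^esub>"])
  next
    fix a assume a: "a \<in> Zset"
    then have ac: "a \<in> carrier FA" by (simp add: Zset_def)
    have "rep_eval sm rho (\<ominus>\<^bsub>FA\<^esub> a) v = 0" for v
    proof -
      have "rep_eval sm rho (\<ominus>\<^bsub>FA\<^esub> a \<oplus>\<^bsub>FA\<^esub> a) v = rep_eval sm rho \<zero>\<^bsub>FA\<^esub> v"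
        using ac by (simp add: F.l_neg)
      then show ?thesis using a ac by (simp add: re_FAadd re_FAzero Zset_def)
    qed
    then show "\<ominus>\<^bsub>FA\<^esub> a \<in> Zset" using ac by (simp add: Zset_def)
  next
    fix a b assume "a \<in> Zset" "b \<in> Zset"
    then show "a \<oplus>\<^bsub>FA\<^esub> b \<in> Zset" by (simp add: Zset_def re_FAadd)
  qed
next
  fix a x :: "'k fw" assume "a \<in> Zset" "x \<in> carrier FA"
  then show "x \<otimes>\<^bsub>FA\<^esub> a \<in> Zset" by (simp add: Zset_def re_FAmult re_vzero)
next
  fix a x :: "'k fw" assume "a \<in> Zset" "x \<in> carrier FA"
  then show "a \<otimes>\<^bsub>FA\<^esub> x \<in> Zset" by (simp add: Zset_def re_FAmult)
qed

end

locale repr = repn sm rho for sm :: "'k::field \<Rightarrow> 'v::ab_group_add \<Rightarrow> 'v" and rho +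
  assumes rels0: "\<And>r v. r \<in> um_rels \<Longrightarrow> rep_eval sm rho r v = 0"
begin

lemma ideal_Z: "um_ideal \<subseteq> Zset"
  unfolding um_ideal_def
  by (rule ring.genideal_minimal[OF ring_FA Zset_ideal]) (use um_rels_carr rels0 in \<open>auto simp: Zset_def\<close>)

lemma act_cls: "f \<in> carrier FA \<Longrightarrow> smult (rep_mod sm rho) (um_cls f) v = rep_eval sm rho f v"
proof -
  assume fc: "f \<in> carrier FA"
  interpret I: ideal um_ideal FA by (rule ideal_um)
  have "f \<in> um_cls f" unfolding um_cls_def using fc by (rule I.a_rcos_self)
  then have "(SOME f'. f' \<in> um_cls f) \<in> um_cls f" by (rule someI[where P = "\<lambda>f'. f' \<in> um_cls f"])
  then obtain i where i: "i \<in> um_ideal" "(SOME f'. f' \<in> um_cls f) = i \<oplus>\<^bsub>FA\<^esub> f"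
    unfolding um_cls_def a_r_coset_def' by blast
  have ic: "i \<in> carrier FA" using i(1) I.a_subset by blast
  have "rep_eval sm rho i v = 0" using i(1) ideal_Z by (auto simp: Zset_def)
  then show ?thesis using i ic fc by (simp add: rep_mod_def re_FAadd)
qed

lemma lmod: "lmodule (um :: 'k fw set ring) (rep_mod sm rho)"
proof -
  have cls: "\<And>x. x \<in> carrier um \<Longrightarrow> \<exists>f\<in>carrier FA. x = um_cls f" using carrier_um by blast
  show ?thesis
  unfolding lmodule_def
  proof (intro conjI ballI)
    show "ring (um :: 'k fw set ring)" by (rule ring_um)
    show "abelian_group (rep_mod sm rho)"
      by (rule abelian_groupI) (auto simp: rep_mod_def add.assoc add.commute intro: exI[of _ "- _"])
  next
    fix a :: "'k fw set" and x assume "a \<in> carrier um" "x \<in> carrier (rep_mod sm rho)"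
    then show "a \<odot>\<^bsub>rep_mod sm rho\<^esub> x \<in> carrier (rep_mod sm rho)" by (simp add: rep_mod_def)
  next
    fix a b :: "'k fw set" and x assume "a \<in> carrier um" "b \<in> carrier um" "x \<in> carrier (rep_mod sm rho)"
    then obtain f g where "f \<in> carrier FA" "a = um_cls f" "g \<in> carrier FA" "b = um_cls g" using cls by blast
    then show "(a \<oplus>\<^bsub>um\<^esub> b) \<odot>\<^bsub>rep_mod sm rho\<^esub> x = a \<odot>\<^bsub>rep_mod sm rho\<^esub> x \<oplus>\<^bsub>rep_mod sm rho\<^esub> b \<odot>\<^bsub>rep_mod sm rho\<^esub> x"
      by (simp add: act_cls re_FAadd flip: cls_add) (simp add: rep_mod_def)
  next
    fix a :: "'k fw set" and x y assume "a \<in> carrier um" "x \<in> carrier (rep_mod sm rho)" "y \<in> carrier (rep_mod sm rho)"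
    then obtain f where "f \<in> carrier FA" "a = um_cls f" using cls by blast
    then show "a \<odot>\<^bsub>rep_mod sm rho\<^esub> (x \<oplus>\<^bsub>rep_mod sm rho\<^esub> y) = a \<odot>\<^bsub>rep_mod sm rho\<^esub> x \<oplus>\<^bsub>rep_mod sm rho\<^esub> a \<odot>\<^bsub>rep_mod sm rho\<^esub> y"
      by (simp add: act_cls re_vadd) (simp add: rep_mod_def re_vadd)
  next
    fix a b :: "'k fw set" and x assume "a \<in> carrier um" "b \<in> carrier um" "x \<in> carrier (rep_mod sm rho)"
    then obtain f g where "f \<in> carrier FA" "a = um_cls f" "g \<in> carrier FA" "b = um_cls g" using cls by blast
    then show "(a \<otimes>\<^bsub>um\<^esub> b) \<odot>\<^bsub>rep_mod sm rho\<^esub> x = a \<odot>\<^bsub>rep_mod sm rho\<^esub> (b \<odot>\<^bsub>rep_mod sm rho\<^esub> x)"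
      by (simp add: act_cls re_FAmult flip: cls_mult)
  next
    fix x assume "x \<in> carrier (rep_mod sm rho)"
    show "(\<one>\<^bsub>um\<^esub> :: 'k fw set) \<odot>\<^bsub>rep_mod sm rho\<^esub> x = x"
      by (simp add: act_cls re_FAone flip: cls_one)
  qed
qed

definition uact where
  "uact x v = smult (rep_mod sm rho) (Rp x) v"

lemma uact_ucls: "f \<in> carrier FA \<Longrightarrow> uact (ucls f) v = rep_eval sm rho f v"
  by (simp add: uact_def Rp_ucls act_cls)

lemma uact_mult: "uact (x * y) v = uact x (uact y v)"
proof -
  obtain f g where "f \<in> carrier FA" "x = ucls f" "g \<in> carrier FA" "y = ucls g" using ucls_surj by blast
  then show ?thesis by (simp add: uact_ucls re_FAmult flip: ucls_mult)
qed
lemma uact_add: "uact (x + y) v = uact x v + uact y v"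
proof -
  obtain f g where "f \<in> carrier FA" "x = ucls f" "g \<in> carrier FA" "y = ucls g" using ucls_surj by blast
  then show ?thesis by (simp add: uact_ucls re_FAadd flip: ucls_add)
qed
lemma uact_one: "uact 1 v = v"
  by (simp add: uact_ucls re_FAone flip: ucls_one)
lemma uact_zero: "uact 0 v = 0"
  by (simp add: uact_ucls re_FAzero flip: ucls_zero)
lemma uact_vzero: "uact x 0 = 0"
proof -
  obtain f where "f \<in> carrier FA" "x = ucls f" using ucls_surj by blast
  then show ?thesis by (simp add: uact_ucls re_vzero)
qed
lemma uact_gen: "uact uA v = rho GA v" "uact uB v = rho GB v" "uact uC v = rho GC v"
  by (simp_all add: uA_def uB_def uC_def uact_ucls re_gen)
lemma uact_scu: "uact (scu k) v = sm k v"
  by (simp add: scu_def uact_ucls re_scal)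

lemmas uact_simps = uact_mult uact_add uact_one uact_zero uact_vzero uact_gen uact_scu

end


locale umcs =
  fixes a b c :: "'r::{ring, monoid_mult}" and sc :: "'k::field \<Rightarrow> 'r"
  assumes ba: "b * a = a * b + c"
  and ca: "c * a = a * c + a"
  and cb: "c * b = b * c + b"
  and cc: "c * c = c"
  and a4: "a * a * a * a = 0"
  and b4: "b * b * b * b = 0"
  and two: "1 + 1 = (0::'r)"
  and sc_add: "sc (k + l) = sc k + sc l"
  and sc_mult: "sc (k * l) = sc k * sc l"
  and sc_one: "sc 1 = 1"
  and sc_zero: "sc 0 = 0"
  and sc_comm: "sc k * x = x * sc k"
begin
lemma add_self: "x + x = (0::'r)"
  by (metis distrib_right mult_1_left two mult_zero_left)
lemma add_self2: "x + (x + y) = (y::'r)"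
  by (simp add: add_self flip: add.assoc)
lemma ba': "b * (a * x) = a * (b * x) + c * x"
  by (metis ba distrib_right mult.assoc)
lemma ca': "c * (a * x) = a * (c * x) + a * x"
  by (metis ca distrib_right mult.assoc)
lemma cb': "c * (b * x) = b * (c * x) + b * x"
  by (metis cb distrib_right mult.assoc)
lemma cc': "c * (c * x) = c * x"
  by (metis cc mult.assoc)
lemma a4': "a * (a * (a * (a * x))) = 0"
  by (metis a4 mult.assoc mult_zero_left)
lemma b4': "b * (b * (b * (b * x))) = 0"
  by (metis b4 mult.assoc mult_zero_left)
lemma a4'': "a * (a * (a * a)) = 0"
  by (metis a4 mult.assoc)
lemma b4'': "b * (b * (b * b)) = 0"
  by (metis b4 mult.assoc)

lemmas N = ba ca cb cc ba' ca' cb' cc' a4' b4' a4'' b4'' add_self add_self2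
  mult.assoc distrib_left distrib_right add.assoc add.commute add.left_commute

lemma sc_comm': "y * (sc k * x) = sc k * (y * x)"
  by (metis sc_comm mult.assoc)

definition "e0 = (1 + a * b + a * a * b * b) * (1 + c)"
definition "e1 = (1 + a * a * b * b) * c"
definition "s0 = a * a * a * b * b * b * (1 + c)"
definition "s1 = (a * b + a * a * b * b + a * a * a * b * b * b) * c"

lemma e0_idem: "e0 * e0 = e0"
  unfolding e0_def by (simp add: N)
lemma e1_idem: "e1 * e1 = e1"
  unfolding e1_def by (simp add: N)
lemma s0_props: "s0 * s0 = 0" "e0 * s0 = s0" "s0 * e0 = s0"
  unfolding e0_def s0_def by (simp_all add: N)
lemma s1_props: "s1 * s1 = 0" "e1 * s1 = s1" "s1 * e1 = s1"
  unfolding e1_def s1_def by (simp_all add: N)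

inductive_set M :: "'r set" where
  Mb0: "1 \<in> M"
|   Mb1: "c \<in> M"
|   Mb2: "b \<in> M"
|   Mb3: "b * c \<in> M"
|   Mb4: "b * b \<in> M"
|   Mb5: "b * (b * c) \<in> M"
|   Mb6: "b * (b * b) \<in> M"
|   Mb7: "b * (b * (b * c)) \<in> M"
|   Mb8: "a \<in> M"
|   Mb9: "a * c \<in> M"
|   Mb10: "a * b \<in> M"
|   Mb11: "a * (b * c) \<in> M"
|   Mb12: "a * (b * b) \<in> M"
|   Mb13: "a * (b * (b * c)) \<in> M"
|   Mb14: "a * (b * (b * b)) \<in> M"
|   Mb15: "a * (b * (b * (b * c))) \<in> M"
|   Mb16: "a * a \<in> M"
|   Mb17: "a * (a * c) \<in> M"
|   Mb18: "a * (a * b) \<in> M"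
|   Mb19: "a * (a * (b * c)) \<in> M"
|   Mb20: "a * (a * (b * b)) \<in> M"
|   Mb21: "a * (a * (b * (b * c))) \<in> M"
|   Mb22: "a * (a * (b * (b * b))) \<in> M"
|   Mb23: "a * (a * (b * (b * (b * c)))) \<in> M"
|   Mb24: "a * (a * a) \<in> M"
|   Mb25: "a * (a * (a * c)) \<in> M"
|   Mb26: "a * (a * (a * b)) \<in> M"
|   Mb27: "a * (a * (a * (b * c))) \<in> M"
|   Mb28: "a * (a * (a * (b * b))) \<in> M"
|   Mb29: "a * (a * (a * (b * (b * c)))) \<in> M"
|   Mb30: "a * (a * (a * (b * (b * b)))) \<in> M"
|   Mb31: "a * (a * (a * (b * (b * (b * c))))) \<in> M"
|   M0: "0 \<in> M"
|   Madd: "x \<in> M \<Longrightarrow> y \<in> M \<Longrightarrow> x + y \<in> M"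
|   Msc: "x \<in> M \<Longrightarrow> sc k * x \<in> M"

lemma M_a: "x \<in> M \<Longrightarrow> a * x \<in> M"
  by (induction rule: M.induct) (simp_all add: N M.intros sc_comm')
lemma M_b: "x \<in> M \<Longrightarrow> b * x \<in> M"
  by (induction rule: M.induct) (simp_all add: N M.intros sc_comm')
lemma M_c: "x \<in> M \<Longrightarrow> c * x \<in> M"
  by (induction rule: M.induct) (simp_all add: N M.intros sc_comm')

definition "Q0 y \<longleftrightarrow> (\<exists>l m. e0 * y * e0 = sc l * e0 + sc m * s0)"
definition "Q1 y \<longleftrightarrow> (\<exists>l m. e1 * y * e1 = sc l * e1 + sc m * s1)"

lemma Q0_zero: "e0 * y * e0 = 0 \<Longrightarrow> Q0 y"
  unfolding Q0_def by (rule exI[of _ 0], rule exI[of _ 0]) (simp add: sc_zero)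
lemma Q0_e: "e0 * y * e0 = e0 \<Longrightarrow> Q0 y"
  unfolding Q0_def by (rule exI[of _ 1], rule exI[of _ 0]) (simp add: sc_zero sc_one)
lemma Q0_s: "e0 * y * e0 = s0 \<Longrightarrow> Q0 y"
  unfolding Q0_def by (rule exI[of _ 0], rule exI[of _ 1]) (simp add: sc_zero sc_one)
lemma Q0_add: "Q0 x \<Longrightarrow> Q0 y \<Longrightarrow> Q0 (x + y)"
proof -
  assume "Q0 x" "Q0 y"
  then obtain l m l' m' where h1: "e0 * x * e0 = sc l * e0 + sc m * s0"
    and h2: "e0 * y * e0 = sc l' * e0 + sc m' * s0" unfolding Q0_def by blast
  have "e0 * (x + y) * e0 = e0 * x * e0 + e0 * y * e0" by (simp only: distrib_left distrib_right)
  also have "\<dots> = sc (l + l') * e0 + sc (m + m') * s0" by (simp only: h1 h2 sc_add distrib_right add_ac)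
  finally show ?thesis unfolding Q0_def by blast
qed
lemma Q0_sc: "Q0 x \<Longrightarrow> Q0 (sc k * x)"
proof -
  assume "Q0 x"
  then obtain l m where h1: "e0 * x * e0 = sc l * e0 + sc m * s0" unfolding Q0_def by blast
  have "e0 * (sc k * x) * e0 = sc k * (e0 * x * e0)" by (simp only: sc_comm' mult.assoc)
  also have "\<dots> = sc k * (sc l * e0 + sc m * s0)" by (simp only: h1)
  also have "\<dots> = sc (k * l) * e0 + sc (k * m) * s0" by (simp only: sc_mult distrib_left mult.assoc)
  finally show ?thesis unfolding Q0_def by blast
qed

lemma Q1_zero: "e1 * y * e1 = 0 \<Longrightarrow> Q1 y"
  unfolding Q1_def by (rule exI[of _ 0], rule exI[of _ 0]) (simp add: sc_zero)
lemma Q1_e: "e1 * y * e1 = e1 \<Longrightarrow> Q1 y"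
  unfolding Q1_def by (rule exI[of _ 1], rule exI[of _ 0]) (simp add: sc_zero sc_one)
lemma Q1_s: "e1 * y * e1 = s1 \<Longrightarrow> Q1 y"
  unfolding Q1_def by (rule exI[of _ 0], rule exI[of _ 1]) (simp add: sc_zero sc_one)
lemma Q1_add: "Q1 x \<Longrightarrow> Q1 y \<Longrightarrow> Q1 (x + y)"
proof -
  assume "Q1 x" "Q1 y"
  then obtain l m l' m' where h1: "e1 * x * e1 = sc l * e1 + sc m * s1"
    and h2: "e1 * y * e1 = sc l' * e1 + sc m' * s1" unfolding Q1_def by blast
  have "e1 * (x + y) * e1 = e1 * x * e1 + e1 * y * e1" by (simp only: distrib_left distrib_right)
  also have "\<dots> = sc (l + l') * e1 + sc (m + m') * s1" by (simp only: h1 h2 sc_add distrib_right add_ac)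
  finally show ?thesis unfolding Q1_def by blast
qed
lemma Q1_sc: "Q1 x \<Longrightarrow> Q1 (sc k * x)"
proof -
  assume "Q1 x"
  then obtain l m where h1: "e1 * x * e1 = sc l * e1 + sc m * s1" unfolding Q1_def by blast
  have "e1 * (sc k * x) * e1 = sc k * (e1 * x * e1)" by (simp only: sc_comm' mult.assoc)
  also have "\<dots> = sc k * (sc l * e1 + sc m * s1)" by (simp only: h1)
  also have "\<dots> = sc (k * l) * e1 + sc (k * m) * s1" by (simp only: sc_mult distrib_left mult.assoc)
  finally show ?thesis unfolding Q1_def by blast
qed

lemma M_Q0: "y \<in> M \<Longrightarrow> Q0 y"
proof (induction rule: M.induct)
    case Mb0 then show ?case by (rule Q0_e) (simp add: N e0_def s0_def)
  next
    case Mb1 then show ?case by (rule Q0_zero) (simp add: N e0_def s0_def)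
  next
    case Mb2 then show ?case by (rule Q0_zero) (simp add: N e0_def s0_def)
  next
    case Mb3 then show ?case by (rule Q0_zero) (simp add: N e0_def s0_def)
  next
    case Mb4 then show ?case by (rule Q0_zero) (simp add: N e0_def s0_def)
  next
    case Mb5 then show ?case by (rule Q0_zero) (simp add: N e0_def s0_def)
  next
    case Mb6 then show ?case by (rule Q0_zero) (simp add: N e0_def s0_def)
  next
    case Mb7 then show ?case by (rule Q0_zero) (simp add: N e0_def s0_def)
  next
    case Mb8 then show ?case by (rule Q0_zero) (simp add: N e0_def s0_def)
  next
    case Mb9 then show ?case by (rule Q0_zero) (simp add: N e0_def s0_def)
  next
    case Mb10 then show ?case by (rule Q0_s) (simp add: N e0_def s0_def)
  next
    case Mb11 then show ?case by (rule Q0_zero) (simp add: N e0_def s0_def)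
  next
    case Mb12 then show ?case by (rule Q0_zero) (simp add: N e0_def s0_def)
  next
    case Mb13 then show ?case by (rule Q0_zero) (simp add: N e0_def s0_def)
  next
    case Mb14 then show ?case by (rule Q0_zero) (simp add: N e0_def s0_def)
  next
    case Mb15 then show ?case by (rule Q0_zero) (simp add: N e0_def s0_def)
  next
    case Mb16 then show ?case by (rule Q0_zero) (simp add: N e0_def s0_def)
  next
    case Mb17 then show ?case by (rule Q0_zero) (simp add: N e0_def s0_def)
  next
    case Mb18 then show ?case by (rule Q0_zero) (simp add: N e0_def s0_def)
  next
    case Mb19 then show ?case by (rule Q0_zero) (simp add: N e0_def s0_def)
  next
    case Mb20 then show ?case by (rule Q0_s) (simp add: N e0_def s0_def)
  next
    case Mb21 then show ?case by (rule Q0_zero) (simp add: N e0_def s0_def)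
  next
    case Mb22 then show ?case by (rule Q0_zero) (simp add: N e0_def s0_def)
  next
    case Mb23 then show ?case by (rule Q0_zero) (simp add: N e0_def s0_def)
  next
    case Mb24 then show ?case by (rule Q0_zero) (simp add: N e0_def s0_def)
  next
    case Mb25 then show ?case by (rule Q0_zero) (simp add: N e0_def s0_def)
  next
    case Mb26 then show ?case by (rule Q0_zero) (simp add: N e0_def s0_def)
  next
    case Mb27 then show ?case by (rule Q0_zero) (simp add: N e0_def s0_def)
  next
    case Mb28 then show ?case by (rule Q0_zero) (simp add: N e0_def s0_def)
  next
    case Mb29 then show ?case by (rule Q0_zero) (simp add: N e0_def s0_def)
  next
    case Mb30 then show ?case by (rule Q0_s) (simp add: N e0_def s0_def)
  next
    case Mb31 then show ?case by (rule Q0_zero) (simp add: N e0_def s0_def)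
  next
    case M0 then show ?case by (rule Q0_zero) simp
  next
    case (Madd x y) then show ?case using Q0_add by blast
  next
    case (Msc x k) then show ?case using Q0_sc by blast
qed

lemma M_Q1: "y \<in> M \<Longrightarrow> Q1 y"
proof (induction rule: M.induct)
    case Mb0 then show ?case by (rule Q1_e) (simp add: N e1_def s1_def)
  next
    case Mb1 then show ?case by (rule Q1_e) (simp add: N e1_def s1_def)
  next
    case Mb2 then show ?case by (rule Q1_zero) (simp add: N e1_def s1_def)
  next
    case Mb3 then show ?case by (rule Q1_zero) (simp add: N e1_def s1_def)
  next
    case Mb4 then show ?case by (rule Q1_zero) (simp add: N e1_def s1_def)
  next
    case Mb5 then show ?case by (rule Q1_zero) (simp add: N e1_def s1_def)
  next
    case Mb6 then show ?case by (rule Q1_zero) (simp add: N e1_def s1_def)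
  next
    case Mb7 then show ?case by (rule Q1_zero) (simp add: N e1_def s1_def)
  next
    case Mb8 then show ?case by (rule Q1_zero) (simp add: N e1_def s1_def)
  next
    case Mb9 then show ?case by (rule Q1_zero) (simp add: N e1_def s1_def)
  next
    case Mb10 then show ?case by (rule Q1_s) (simp add: N e1_def s1_def)
  next
    case Mb11 then show ?case by (rule Q1_s) (simp add: N e1_def s1_def)
  next
    case Mb12 then show ?case by (rule Q1_zero) (simp add: N e1_def s1_def)
  next
    case Mb13 then show ?case by (rule Q1_zero) (simp add: N e1_def s1_def)
  next
    case Mb14 then show ?case by (rule Q1_zero) (simp add: N e1_def s1_def)
  next
    case Mb15 then show ?case by (rule Q1_zero) (simp add: N e1_def s1_def)
  next
    case Mb16 then show ?case by (rule Q1_zero) (simp add: N e1_def s1_def)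
  next
    case Mb17 then show ?case by (rule Q1_zero) (simp add: N e1_def s1_def)
  next
    case Mb18 then show ?case by (rule Q1_zero) (simp add: N e1_def s1_def)
  next
    case Mb19 then show ?case by (rule Q1_zero) (simp add: N e1_def s1_def)
  next
    case Mb20 then show ?case by (rule Q1_zero) (simp add: N e1_def s1_def)
  next
    case Mb21 then show ?case by (rule Q1_zero) (simp add: N e1_def s1_def)
  next
    case Mb22 then show ?case by (rule Q1_zero) (simp add: N e1_def s1_def)
  next
    case Mb23 then show ?case by (rule Q1_zero) (simp add: N e1_def s1_def)
  next
    case Mb24 then show ?case by (rule Q1_zero) (simp add: N e1_def s1_def)
  next
    case Mb25 then show ?case by (rule Q1_zero) (simp add: N e1_def s1_def)
  next
    case Mb26 then show ?case by (rule Q1_zero) (simp add: N e1_def s1_def)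
  next
    case Mb27 then show ?case by (rule Q1_zero) (simp add: N e1_def s1_def)
  next
    case Mb28 then show ?case by (rule Q1_zero) (simp add: N e1_def s1_def)
  next
    case Mb29 then show ?case by (rule Q1_zero) (simp add: N e1_def s1_def)
  next
    case Mb30 then show ?case by (rule Q1_zero) (simp add: N e1_def s1_def)
  next
    case Mb31 then show ?case by (rule Q1_zero) (simp add: N e1_def s1_def)
  next
    case M0 then show ?case by (rule Q1_zero) simp
  next
    case (Madd x y) then show ?case using Q1_add by blast
  next
    case (Msc x k) then show ?case using Q1_sc by blast
qed

end


lemma lmod_ideal:
  fixes R (structure)
  assumes R: "ring R" and ec: "e \<in> carrier R"
  shows "lmodule R (left_ideal_mod R e)"
proof -
  interpret ring R by (rule R)
  let ?P = "left_ideal_mod R e"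
  have cP: "carrier ?P = {x \<otimes> e | x. x \<in> carrier R}" by (simp add: left_ideal_mod_def)
  have cPsub: "carrier ?P \<subseteq> carrier R" using ec by (auto simp: cP)
  show ?thesis
  unfolding lmodule_def
  proof (intro conjI ballI)
    show "ring R" by (rule R)
    show "abelian_group ?P"
    proof (rule abelian_groupI)
      fix x y assume "x \<in> carrier ?P" "y \<in> carrier ?P"
      then obtain x' y' where "x' \<in> carrier R" "x = x' \<otimes> e" "y' \<in> carrier R" "y = y' \<otimes> e" by (auto simp: cP)
      then show "x \<oplus>\<^bsub>?P\<^esub> y \<in> carrier ?P"
        using ec by (auto simp: cP left_ideal_mod_def l_distr intro!: exI[of _ "x' \<oplus> y'"])
    next
      show "\<zero>\<^bsub>?P\<^esub> \<in> carrier ?P" using ec by (auto simp: cP left_ideal_mod_def intro!: exI[of _ "\<zero>"])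
    next
      fix x y z assume "x \<in> carrier ?P" "y \<in> carrier ?P" "z \<in> carrier ?P"
      then have "x \<in> carrier R" "y \<in> carrier R" "z \<in> carrier R" using cPsub by blast+
      then show "x \<oplus>\<^bsub>?P\<^esub> y \<oplus>\<^bsub>?P\<^esub> z = x \<oplus>\<^bsub>?P\<^esub> (y \<oplus>\<^bsub>?P\<^esub> z)"
        by (simp add: left_ideal_mod_def a_assoc)
    next
      fix x y assume "x \<in> carrier ?P" "y \<in> carrier ?P"
      then have "x \<in> carrier R" "y \<in> carrier R" using cPsub by blast+
      then show "x \<oplus>\<^bsub>?P\<^esub> y = y \<oplus>\<^bsub>?P\<^esub> x"
        by (simp add: left_ideal_mod_def a_comm)
    next
      fix x assume "x \<in> carrier ?P"
      then have "x \<in> carrier R" using cPsub by blast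
      then show "\<zero>\<^bsub>?P\<^esub> \<oplus>\<^bsub>?P\<^esub> x = x" by (simp add: left_ideal_mod_def)
    next
      fix x assume "x \<in> carrier ?P"
      then obtain x' where x': "x' \<in> carrier R" "x = x' \<otimes> e" by (auto simp: cP)
      have "\<ominus> x' \<otimes> e \<in> carrier ?P" using x' by (auto simp: cP)
      moreover have "\<ominus> x' \<otimes> e \<oplus>\<^bsub>?P\<^esub> x = \<zero>\<^bsub>?P\<^esub>"
        using x' ec by (simp add: left_ideal_mod_def l_minus l_neg)
      ultimately show "\<exists>y\<in>carrier ?P. y \<oplus>\<^bsub>?P\<^esub> x = \<zero>\<^bsub>?P\<^esub>" by blast
    qed
  next
    fix a x assume "a \<in> carrier R" "x \<in> carrier ?P"
    moreover obtain x' where "x' \<in> carrier R" "x = x' \<otimes> e" using \<open>x \<in> carrier ?P\<close> unfolding cP by blast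
    ultimately show "a \<odot>\<^bsub>?P\<^esub> x \<in> carrier ?P"
      using ec unfolding cP by (auto simp: left_ideal_mod_def m_assoc[symmetric] intro!: exI[of _ "a \<otimes> x'"])
  next
    fix a b x assume "a \<in> carrier R" "b \<in> carrier R" "x \<in> carrier ?P"
    moreover have "x \<in> carrier R" using \<open>x \<in> carrier ?P\<close> cPsub by blast
    ultimately show "(a \<oplus> b) \<odot>\<^bsub>?P\<^esub> x = a \<odot>\<^bsub>?P\<^esub> x \<oplus>\<^bsub>?P\<^esub> b \<odot>\<^bsub>?P\<^esub> x"
      by (simp add: left_ideal_mod_def l_distr)
  next
    fix a x y assume "a \<in> carrier R" "x \<in> carrier ?P" "y \<in> carrier ?P"
    moreover have "x \<in> carrier R" "y \<in> carrier R" using \<open>x \<in> carrier ?P\<close> \<open>y \<in> carrier ?P\<close> cPsub by blast+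
    ultimately show "a \<odot>\<^bsub>?P\<^esub> (x \<oplus>\<^bsub>?P\<^esub> y) = a \<odot>\<^bsub>?P\<^esub> x \<oplus>\<^bsub>?P\<^esub> a \<odot>\<^bsub>?P\<^esub> y"
      by (simp add: left_ideal_mod_def r_distr)
  next
    fix a b x assume "a \<in> carrier R" "b \<in> carrier R" "x \<in> carrier ?P"
    moreover have "x \<in> carrier R" using \<open>x \<in> carrier ?P\<close> cPsub by blast
    ultimately show "(a \<otimes> b) \<odot>\<^bsub>?P\<^esub> x = a \<odot>\<^bsub>?P\<^esub> (b \<odot>\<^bsub>?P\<^esub> x)"
      by (simp add: left_ideal_mod_def m_assoc)
  next
    fix x assume "x \<in> carrier ?P"
    then have "x \<in> carrier R" using cPsub by blast
    then show "\<one> \<odot>\<^bsub>?P\<^esub> x = x" by (simp add: left_ideal_mod_def)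
  qed
qed

lemma lmoduleD:
  assumes "lmodule R M"
  shows "ring R" "abelian_group M"
    "\<And>a x. a \<in> carrier R \<Longrightarrow> x \<in> carrier M \<Longrightarrow> a \<odot>\<^bsub>M\<^esub> x \<in> carrier M"
    "\<And>a b x. a \<in> carrier R \<Longrightarrow> b \<in> carrier R \<Longrightarrow> x \<in> carrier M \<Longrightarrow> (a \<oplus>\<^bsub>R\<^esub> b) \<odot>\<^bsub>M\<^esub> x = a \<odot>\<^bsub>M\<^esub> x \<oplus>\<^bsub>M\<^esub> b \<odot>\<^bsub>M\<^esub> x"
    "\<And>a x y. a \<in> carrier R \<Longrightarrow> x \<in> carrier M \<Longrightarrow> y \<in> carrier M \<Longrightarrow> a \<odot>\<^bsub>M\<^esub> (x \<oplus>\<^bsub>M\<^esub> y) = a \<odot>\<^bsub>M\<^esub> x \<oplus>\<^bsub>M\<^esub> a \<odot>\<^bsub>M\<^esub> y"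
    "\<And>a b x. a \<in> carrier R \<Longrightarrow> b \<in> carrier R \<Longrightarrow> x \<in> carrier M \<Longrightarrow> (a \<otimes>\<^bsub>R\<^esub> b) \<odot>\<^bsub>M\<^esub> x = a \<odot>\<^bsub>M\<^esub> (b \<odot>\<^bsub>M\<^esub> x)"
    "\<And>x. x \<in> carrier M \<Longrightarrow> \<one>\<^bsub>R\<^esub> \<odot>\<^bsub>M\<^esub> x = x"
  using assms unfolding lmodule_def by (simp_all (no_asm_simp))

lemma mod_homD:
  assumes "f \<in> mod_hom R M N"
  shows "\<And>x. x \<in> carrier M \<Longrightarrow> f x \<in> carrier N"
    "\<And>x y. x \<in> carrier M \<Longrightarrow> y \<in> carrier M \<Longrightarrow> f (x \<oplus>\<^bsub>M\<^esub> y) = f x \<oplus>\<^bsub>N\<^esub> f y"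
    "\<And>r x. r \<in> carrier R \<Longrightarrow> x \<in> carrier M \<Longrightarrow> f (r \<odot>\<^bsub>M\<^esub> x) = r \<odot>\<^bsub>N\<^esub> f x"
  using assms unfolding mod_hom_def by (auto simp: Pi_iff)

lemma proj_ideal:
  fixes R (structure)
  assumes R: "ring R" and ec: "e \<in> carrier R" and idem: "e \<otimes> e = e"
  shows "projective R (left_ideal_mod R e) TYPE('n)"
proof -
  interpret ring R by (rule R)
  let ?P = "left_ideal_mod R e"
  have cP: "carrier ?P = {x \<otimes> e | x. x \<in> carrier R}" by (simp add: left_ideal_mod_def)
  have cPsub: "carrier ?P \<subseteq> carrier R" using ec by (auto simp: cP)
  have "e = \<one> \<otimes> e" using ec by simp
  then have eP: "e \<in> carrier ?P" unfolding cP using one_closed by blast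
  have xe0: "\<forall>x \<in> carrier ?P. x \<otimes> e = x" using ec idem by (auto simp: cP m_assoc)
  have xe: "x \<otimes> e = x" if "x \<in> carrier ?P" for x using xe0 that by blast
  show ?thesis
  unfolding projective_def
  proof (intro conjI allI impI)
    show "lmodule R ?P" by (rule lmod_ideal[OF R ec])
  next
    fix N N' :: "('a, 'n) module" and g h
    assume H: "lmodule R N \<and> lmodule R N' \<and> g \<in> mod_hom R N N' \<and> g ` carrier N = carrier N' \<and> h \<in> mod_hom R ?P N'"
    have lN: "lmodule R N" using H by blast
    have ghom: "g \<in> mod_hom R N N'" and hhom: "h \<in> mod_hom R ?P N'" using H by blast+
    have hc: "h e \<in> carrier N'" by (rule mod_homD(1)[OF hhom eP])
    have gs: "g ` carrier N = carrier N'" using H by blast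
    have "h e \<in> g ` carrier N" unfolding gs by (rule hc)
    then obtain n0 where n0a: "n0 \<in> carrier N" and n0b: "h e = g n0" by (rule imageE)
    note n0 = n0a n0b[symmetric]
    define f where "f x = x \<odot>\<^bsub>N\<^esub> n0" for x
    have "f \<in> mod_hom R ?P N"
      unfolding mod_hom_def
    proof (intro CollectI conjI ballI)
      show "f \<in> carrier ?P \<rightarrow> carrier N"
        using lmoduleD(3)[OF lN] n0 cPsub by (auto simp: f_def)
    next
      fix x y assume "x \<in> carrier ?P" "y \<in> carrier ?P"
      then have "x \<in> carrier R" "y \<in> carrier R" using cPsub by blast+
      then show "f (x \<oplus>\<^bsub>?P\<^esub> y) = f x \<oplus>\<^bsub>N\<^esub> f y"
        using lmoduleD(4)[OF lN] n0 by (simp add: f_def left_ideal_mod_def)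
    next
      fix r x assume "r \<in> carrier R" "x \<in> carrier ?P"
      moreover have "x \<in> carrier R" using \<open>x \<in> carrier ?P\<close> cPsub by blast
      ultimately show "f (r \<odot>\<^bsub>?P\<^esub> x) = r \<odot>\<^bsub>N\<^esub> f x"
        using lmoduleD(6)[OF lN] n0 by (simp add: f_def left_ideal_mod_def)
    qed
    moreover have "\<forall>x\<in>carrier ?P. g (f x) = h x"
    proof
      fix x assume x: "x \<in> carrier ?P"
      then have xR: "x \<in> carrier R" using cPsub by blast
      have "g (f x) = x \<odot>\<^bsub>N'\<^esub> g n0" using mod_homD(3)[OF ghom] xR n0 by (simp add: f_def)
      also have "\<dots> = x \<odot>\<^bsub>N'\<^esub> h e" using n0 by simp
      also have "\<dots> = h (x \<odot>\<^bsub>?P\<^esub> e)" using mod_homD(3)[OF hhom] xR eP by simp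
      also have "\<dots> = h x" using xe[OF x] by (simp add: left_ideal_mod_def)
      finally show "g (f x) = h x" .
    qed
    ultimately show "\<exists>f\<in>mod_hom R ?P N. \<forall>x\<in>carrier ?P. g (f x) = h x" by blast
  qed
qed


lemma scu_comm': "y * (scu k * x) = scu k * (y * x)"
  by (metis scu_comm mult.assoc)

lemma carrier_lim: "carrier (left_ideal_mod um (Rp e)) = range (\<lambda>y. Rp (y * e))"
proof -
  have "carrier (left_ideal_mod um (Rp e)) = {x \<otimes>\<^bsub>um\<^esub> Rp e | x. x \<in> carrier um}"
    by (simp add: left_ideal_mod_def)
  also have "\<dots> = range (\<lambda>y. Rp (y * e))"
  proof (rule equalityI; rule subsetI)
    fix z assume "z \<in> {x \<otimes>\<^bsub>um\<^esub> Rp e | x. x \<in> carrier um}"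
    then obtain x where x: "x \<in> carrier um" "z = x \<otimes>\<^bsub>um\<^esub> Rp e" by blast
    then have "z = Rp (Ab x * e)" by (simp add: Rp_mult Ab_inverse)
    then show "z \<in> range (\<lambda>y. Rp (y * e))" by blast
  next
    fix z assume "z \<in> range (\<lambda>y. Rp (y * e))"
    then obtain y where "z = Rp (y * e)" by blast
    then have "z = Rp y \<otimes>\<^bsub>um\<^esub> Rp e" by (simp add: Rp_mult)
    then show "z \<in> {x \<otimes>\<^bsub>um\<^esub> Rp e | x. x \<in> carrier um}" using Rp_c by blast
  qed
  finally show ?thesis .
qed

context repr
begin

lemma ess:
  fixes e s :: "'k umt" and v0 :: 'v
  assumes idem: "e * e = e" and ss: "s * s = 0" and es: "e * s = s" and se: "s * e = s"
  and Q: "\<And>y. \<exists>l m. e * y * e = scu l * e + scu m * s"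
  and ev: "uact e v0 = v0" and sv: "uact s v0 = 0"
  and l1: "\<And>l. sm l v0 = v0 \<Longrightarrow> l = 1"
  and surj: "\<And>v. \<exists>y. uact (y * e) v0 = v"
  shows "essential_epi um (\<lambda>x. x \<odot>\<^bsub>rep_mod sm rho\<^esub> v0) (left_ideal_mod um (Rp e)) (rep_mod sm rho)"
proof -
  let ?P = "left_ideal_mod um (Rp e)"
  let ?V = "rep_mod sm rho"
  let ?pi = "\<lambda>x. x \<odot>\<^bsub>?V\<^esub> v0"
  have cP: "carrier ?P = range (\<lambda>y. Rp (y * e))" by (rule carrier_lim)
  have piRp: "?pi (Rp z) = uact z v0" for z by (simp add: uact_def)
  have addP: "x \<oplus>\<^bsub>?P\<^esub> y = x \<oplus>\<^bsub>um\<^esub> y" for x y by (simp add: left_ideal_mod_def)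
  have smP: "x \<odot>\<^bsub>?P\<^esub> y = x \<otimes>\<^bsub>um\<^esub> y" for x y by (simp add: left_ideal_mod_def)
  have cV: "carrier ?V = UNIV" and addV: "x \<oplus>\<^bsub>?V\<^esub> y = x + y" and zV: "\<zero>\<^bsub>?V\<^esub> = 0" for x y
    by (simp_all add: rep_mod_def)
  have hom: "?pi \<in> mod_hom um ?P ?V"
    unfolding mod_hom_def
  proof (intro CollectI conjI ballI)
    show "?pi \<in> carrier ?P \<rightarrow> carrier ?V" by (simp add: cV)
  next
    fix x y :: "'k fw set" assume "x \<in> carrier ?P" "y \<in> carrier ?P"
    then obtain y1 y2 where "x = Rp (y1 * e)" "y = Rp (y2 * e)" unfolding cP by blast
    then show "?pi (x \<oplus>\<^bsub>?P\<^esub> y) = ?pi x \<oplus>\<^bsub>?V\<^esub> ?pi y"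
      by (simp only: addP addV piRp flip: Rp_add) (simp add: uact_add)
  next
    fix r x :: "'k fw set" assume r: "r \<in> carrier um" and "x \<in> carrier ?P"
    then obtain y where y: "x = Rp (y * e)" unfolding cP by blast
    have "r = Rp (Ab r)" using r by (simp add: Ab_inverse)
    then show "?pi (r \<odot>\<^bsub>?P\<^esub> x) = r \<odot>\<^bsub>?V\<^esub> ?pi x"
      using y by (metis smP Rp_mult piRp uact_mult uact_def)
  qed
  have sur: "?pi ` carrier ?P = carrier ?V"
  proof (rule equalityI)
    show "?pi ` carrier ?P \<subseteq> carrier ?V" by (simp add: cV)
    show "carrier ?V \<subseteq> ?pi ` carrier ?P"
    proof
      fix v assume "v \<in> carrier ?V"
      obtain y where "uact (y * e) v0 = v" using surj by blast
      then have "?pi (Rp (y * e)) = v" by (simp add: piRp)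
      moreover have "Rp (y * e) \<in> carrier ?P" unfolding cP by blast
      ultimately show "v \<in> ?pi ` carrier ?P" by blast
    qed
  qed
  have sup: "L = carrier ?P" if L: "submodule um L ?P"
    and Ls: "{l \<oplus>\<^bsub>?P\<^esub> k | l k. l \<in> L \<and> k \<in> carrier ?P \<and> ?pi k = \<zero>\<^bsub>?V\<^esub>} = carrier ?P" for L :: "'k fw set set"
  proof -
    have LP: "L \<subseteq> carrier ?P" and Lsm: "\<And>r x. r \<in> carrier um \<Longrightarrow> x \<in> L \<Longrightarrow> r \<odot>\<^bsub>?P\<^esub> x \<in> L"
      using L unfolding submodule_def by blast+
    have "Rp (1 * e) \<in> carrier ?P" unfolding cP by blast
    then have "Rp e \<in> carrier ?P" by simp
    then obtain l k where lk: "Rp e = l \<oplus>\<^bsub>?P\<^esub> k" "l \<in> L" "k \<in> carrier ?P" "?pi k = \<zero>\<^bsub>?V\<^esub>"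
      using Ls by blast
    obtain yl where yl: "l = Rp (yl * e)" using lk(2) LP unfolding cP by blast
    obtain yk where yk: "k = Rp (yk * e)" using lk(3) unfolding cP by blast
    have e_eq: "e = yl * e + yk * e"
      using lk(1) yl yk by (simp add: addP Rp_inject[symmetric] Rp_add)
    have k0: "uact (yk * e) v0 = 0" using lk(4) yk by (simp add: piRp zV)
    have "v0 = uact (yl * e) v0 + uact (yk * e) v0" using ev e_eq by (metis uact_add)
    then have ylv: "uact (yl * e) v0 = v0" using k0 by simp
    obtain l' m where lm: "e * yl * e = scu l' * e + scu m * s" using Q by blast
    have "uact (e * yl * e) v0 = v0" using ylv ev by (simp add: mult.assoc uact_mult)
    moreover have "uact (e * yl * e) v0 = sm l' v0"
      using lm ev sv by (simp add: uact_add uact_mult uact_scu)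
    ultimately have "l' = 1" using l1 by simp
    then have t: "e * (yl * e) = e + scu m * s" using lm by (simp add: mult.assoc scu_one)
    have r: "(e - scu m * s) * (e * (yl * e)) = e"
    proof -
      have "(e - scu m * s) * (e + scu m * s) = e * e + e * (scu m * s) - scu m * s * e - scu m * s * (scu m * s)"
        by (simp add: algebra_simps)
      also have "\<dots> = e"
        by (simp add: mult.assoc scu_comm' idem es se ss)
      finally show ?thesis using t by simp
    qed
    have eL: "Rp e \<in> L"
    proof -
      have "Rp e \<odot>\<^bsub>?P\<^esub> l \<in> L" using Lsm[OF Rp_c lk(2)] .
      then have "Rp (e - scu m * s) \<odot>\<^bsub>?P\<^esub> (Rp e \<odot>\<^bsub>?P\<^esub> l) \<in> L" using Lsm[OF Rp_c] by blast
      moreover have "Rp (e - scu m * s) \<odot>\<^bsub>?P\<^esub> (Rp e \<odot>\<^bsub>?P\<^esub> l) = Rp e"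
        using r yl by (simp add: smP Rp_mult[symmetric])
      ultimately show ?thesis by simp
    qed
    have "carrier ?P \<subseteq> L"
    proof
      fix x assume "x \<in> carrier ?P"
      then obtain y where "x = Rp (y * e)" unfolding cP by blast
      then have "x = Rp y \<odot>\<^bsub>?P\<^esub> Rp e" by (simp add: smP Rp_mult)
      then show "x \<in> L" using Lsm[OF Rp_c eL] by simp
    qed
    then show ?thesis using LP by blast
  qed
  show ?thesis unfolding essential_epi_def using hom sur sup by blast
qed

end


lemma umcs_inst:
  assumes ch: "CHAR('k::field) = 2"
  shows "umcs (uA :: 'k umt) uB uC scu"
proof -
  have two: "(1::'k umt) + 1 = 0" by (rule umt_two[OF ch])
  have m1: "scu (-1::'k) = 1" by (rule scu_m1[OF ch])
  note rv = rel_vals[where 'k='k, unfolded m1 mult_1_left]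
  show ?thesis
  proof
    show "uB * uA = uA * uB + (uC :: 'k umt)" by (rule char2_rel[OF two rv(1)])
    show "uC * uA = uA * uC + (uA :: 'k umt)" by (rule char2_rel[OF two rv(2)])
    show "uC * uB = uB * uC + (uB :: 'k umt)" by (rule char2_rel[OF two rv(3)])
    have "0 + uC * uC + uC = (0 :: 'k umt)" using rv(6) by simp
    from char2_rel[OF two this] show "uC * uC = (uC :: 'k umt)" by simp
    show "uA * uA * uA * uA = (0 :: 'k umt)" by (rule rv(4))
    show "uB * uB * uB * uB = (0 :: 'k umt)" by (rule rv(5))
    show "1 + 1 = (0 :: 'k umt)" by (rule two)
  qed (rule scu_add scu_mult scu_one scu_zero scu_comm)+
qed

lemma umt_in_M:
  assumes ch: "CHAR('k::field) = 2"
  shows "(x :: 'k umt) \<in> umcs.M uA uB uC scu"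
proof -
  interpret U: umcs "uA :: 'k umt" uB uC scu by (rule umcs_inst[OF ch])
  have w: "uword w \<in> U.M" for w
  proof (induction w)
    case Nil then show ?case by (simp add: uword_Nil U.M.intros)
  next
    case (Cons g w)
    then show ?case
      by (cases g) (simp_all add: uword_Cons ugen_def U.M_a U.M_b U.M_c flip: uA_def uB_def uC_def)
  qed
  show ?thesis
  proof (rule umt_span_induct[where P = "\<lambda>x. x \<in> U.M"])
    show "0 \<in> U.M" by (rule U.M0)
    show "x + y \<in> U.M" if "x \<in> U.M" "y \<in> U.M" for x y using that by (rule U.Madd)
    show "scu k * uword w \<in> U.M" for k w using w by (rule U.Msc)
  qed
qed


lemma V0_repn: "repn (\<lambda>(k::'k::field) (x::'k). k * x) (\<lambda>g (x::'k). 0)"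
  by unfold_locales (simp_all add: algebra_simps)

lemma V0_repr: "repr (\<lambda>(k::'k::field) (x::'k). k * x) (\<lambda>g (x::'k). 0)"
proof (rule repr.intro[OF V0_repn], rule repr_axioms.intro)
  note L = repn.re_FAadd[OF V0_repn] repn.re_FAmult[OF V0_repn] repn.re_gen[OF V0_repn] repn.re_scal[OF V0_repn]
  fix r :: "'k fw" and v :: 'k
  assume "r \<in> um_rels"
  then show "rep_eval (\<lambda>(k::'k) (x::'k). k * x) (\<lambda>g (x::'k). 0) r v = 0"
    unfolding um_rels_def
    by (elim insertE emptyE; simp only: L F.m_closed F.a_closed fa_gen_carr fa_scal_carr; simp)
qed

lemma V1_repn: "repn (\<lambda>(k::'k::field) (x, y, z). (k * x, k * y, k * z)) V1_act"
proof
  fix k l :: 'k and v w :: "'k \<times> 'k \<times> 'k" and g :: gen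
  show "(case v of (x, y, z) \<Rightarrow> ((k + l) * x, (k + l) * y, (k + l) * z)) =
    (case v of (x, y, z) \<Rightarrow> (k * x, k * y, k * z)) + (case v of (x, y, z) \<Rightarrow> (l * x, l * y, l * z))"
    by (cases v rule: prod_cases3) (simp add: algebra_simps)
  show "(case v + w of (x, y, z) \<Rightarrow> (k * x, k * y, k * z)) =
    (case v of (x, y, z) \<Rightarrow> (k * x, k * y, k * z)) + (case w of (x, y, z) \<Rightarrow> (k * x, k * y, k * z))"
    by (cases v rule: prod_cases3, cases w rule: prod_cases3) (simp add: algebra_simps)
  show "(case v of (x, y, z) \<Rightarrow> (k * l * x, k * l * y, k * l * z)) =
    (case case v of (x, y, z) \<Rightarrow> (l * x, l * y, l * z) of (x, y, z) \<Rightarrow> (k * x, k * y, k * z))"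
    by (cases v rule: prod_cases3) (simp add: algebra_simps)
  show "(case v of (x, y, z) \<Rightarrow> (1 * x, 1 * y, 1 * z)) = v"
    by (cases v rule: prod_cases3) simp
  show "V1_act g (v + w) = V1_act g v + V1_act g w"
    by (cases v rule: prod_cases3, cases w rule: prod_cases3, cases g) simp_all
  show "V1_act g (case v of (x, y, z) \<Rightarrow> (k * x, k * y, k * z)) =
    (case V1_act g v of (x, y, z) \<Rightarrow> (k * x, k * y, k * z))"
    by (cases v rule: prod_cases3, cases g) simp_all
qed


lemma V1_repr:
  assumes ch: "CHAR('k::field) = 2"
  shows "repr (\<lambda>(k::'k::field) (x, y, z). (k * x, k * y, k * z)) V1_act"
proof (rule repr.intro[OF V1_repn], rule repr_axioms.intro)
  note L = repn.re_FAadd[OF V1_repn] repn.re_FAmult[OF V1_repn] repn.re_gen[OF V1_repn] repn.re_scal[OF V1_repn]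
  have two: "(1::'k) + 1 = 0" by (rule char2[OF ch])
  have m1: "(-1::'k) = 1" using two by (metis add_eq_0_iff2)
  have yy: "y + y = (0::'k)" for y by (metis two distrib_right mult_1_left mult_zero_left)
  fix r :: "'k fw" and v :: "'k \<times> 'k \<times> 'k"
  assume "r \<in> um_rels"
  then show "rep_eval (\<lambda>(k::'k::field) (x, y, z). (k * x, k * y, k * z)) V1_act r v = 0"
    unfolding um_rels_def
    by (elim insertE emptyE; simp only: L F.m_closed F.a_closed fa_gen_carr fa_scal_carr;
        cases v rule: prod_cases3; simp add: m1 yy zero_prod_def)
qed


theorem lemma3p15:
  assumes "CHAR('k::alg_closed_field) = 2"
  shows "(um_e0 :: 'k fw set) \<in> carrier um \<and> um_e0 \<otimes>\<^bsub>um\<^esub> um_e0 = (um_e0 :: 'k fw set) \<and>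
         (um_e1 :: 'k fw set) \<in> carrier um \<and> um_e1 \<otimes>\<^bsub>um\<^esub> um_e1 = (um_e1 :: 'k fw set) \<and>
         projective_cover (um :: 'k fw set ring) (left_ideal_mod um um_e0) V0 TYPE('n) \<and>
         projective_cover (um :: 'k fw set ring) (left_ideal_mod um um_e1) V1 TYPE('n)"
proof -
  interpret U: umcs "uA :: 'k umt" uB uC scu by (rule umcs_inst[OF assms])
  have ra: "um_a = Rp (uA :: 'k umt)" "um_b = Rp (uB :: 'k umt)" "um_c = Rp (uC :: 'k umt)"
    by (simp_all add: um_a_def um_b_def um_c_def uA_def uB_def uC_def Rp_ucls)
  have e0: "(um_e0 :: 'k fw set) = Rp U.e0"
    by (simp add: um_e0_def U.e0_def Rp_ops ra)
  have e1: "(um_e1 :: 'k fw set) = Rp U.e1"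
    by (simp add: um_e1_def U.e1_def Rp_ops ra)
  have e0c: "(um_e0 :: 'k fw set) \<in> carrier um" by (simp add: e0 Rp_c)
  have e1c: "(um_e1 :: 'k fw set) \<in> carrier um" by (simp add: e1 Rp_c)
  have e0i: "um_e0 \<otimes>\<^bsub>um\<^esub> um_e0 = (um_e0 :: 'k fw set)" by (simp add: e0 U.e0_idem flip: Rp_mult)
  have e1i: "um_e1 \<otimes>\<^bsub>um\<^esub> um_e1 = (um_e1 :: 'k fw set)" by (simp add: e1 U.e1_idem flip: Rp_mult)
  have Q0: "\<exists>l m. U.e0 * y * U.e0 = scu l * U.e0 + scu m * U.s0" for y
    using U.M_Q0[OF umt_in_M[OF assms]] unfolding U.Q0_def by blast
  have Q1: "\<exists>l m. U.e1 * y * U.e1 = scu l * U.e1 + scu m * U.s1" for y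
    using U.M_Q1[OF umt_in_M[OF assms]] unfolding U.Q1_def by blast
  note S0 = repr.uact_simps[OF V0_repr]
  note S1 = repr.uact_simps[OF V1_repr[OF assms]]
  have ev0: "repr.uact (\<lambda>(k::'k) (x::'k). k * x) (\<lambda>g (x::'k). 0) U.e0 1 = 1"
    by (simp add: U.e0_def S0)
  have sv0: "repr.uact (\<lambda>(k::'k) (x::'k). k * x) (\<lambda>g (x::'k). 0) U.s0 1 = 0"
    by (simp add: U.s0_def S0)
  have ev1: "repr.uact (\<lambda>(k::'k) (x, y, z). (k * x, k * y, k * z)) V1_act U.e1 (1, 0, 0) = (1, 0, 0)"
    by (simp add: U.e1_def S1 zero_prod_def)
  have sv1: "repr.uact (\<lambda>(k::'k) (x, y, z). (k * x, k * y, k * z)) V1_act U.s1 (1, 0, 0) = 0"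
    by (simp add: U.s1_def S1 zero_prod_def)
  have pc0: "projective_cover (um :: 'k fw set ring) (left_ideal_mod um um_e0) V0 TYPE('n)"
    unfolding projective_cover_def
  proof (intro conjI exI)
    show "projective (um :: 'k fw set ring) (left_ideal_mod um um_e0) TYPE('n)"
      by (rule proj_ideal[OF ring_um e0c e0i])
    show "lmodule (um :: 'k fw set ring) V0" unfolding V0_def by (rule repr.lmod[OF V0_repr])
    show "essential_epi (um :: 'k fw set ring) (\<lambda>x. x \<odot>\<^bsub>V0\<^esub> (1::'k)) (left_ideal_mod um um_e0) V0"
      unfolding V0_def e0
    proof (rule repr.ess[OF V0_repr U.e0_idem U.s0_props Q0 ev0 sv0])
      show "l = 1" if "l * 1 = (1::'k)" for l using that by simp
      show "\<exists>y. repr.uact (\<lambda>(k::'k) (x::'k). k * x) (\<lambda>g (x::'k). 0) (y * U.e0) 1 = v" for v :: 'k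
        by (rule exI[of _ "scu v"]) (simp add: S0 ev0)
    qed
  qed
  have pc1: "projective_cover (um :: 'k fw set ring) (left_ideal_mod um um_e1) V1 TYPE('n)"
    unfolding projective_cover_def
  proof (intro conjI exI)
    show "projective (um :: 'k fw set ring) (left_ideal_mod um um_e1) TYPE('n)"
      by (rule proj_ideal[OF ring_um e1c e1i])
    show "lmodule (um :: 'k fw set ring) V1" unfolding V1_def by (rule repr.lmod[OF V1_repr[OF assms]])
    show "essential_epi (um :: 'k fw set ring) (\<lambda>x. x \<odot>\<^bsub>V1\<^esub> ((1::'k), (0::'k), (0::'k))) (left_ideal_mod um um_e1) V1"
      unfolding V1_def e1
    proof (rule repr.ess[OF V1_repr[OF assms] U.e1_idem U.s1_props Q1 ev1 sv1])
      show "l = 1" if "(case (1::'k, 0::'k, 0::'k) of (x, y, z) \<Rightarrow> (l * x, l * y, l * z)) = (1, 0, 0)" for l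
        using that by simp
      show "\<exists>y. repr.uact (\<lambda>(k::'k) (x, y, z). (k * x, k * y, k * z)) V1_act (y * U.e1) (1, 0, 0) = v" for v :: "'k \<times> 'k \<times> 'k"
      proof (cases v rule: prod_cases3)
        case (fields x y z)
        show ?thesis
          by (rule exI[of _ "scu x + scu y * uA + scu z * (uA * uA)"]) (simp add: S1 ev1 mult.assoc fields)
      qed
    qed
  qed
  show ?thesis using e0c e0i e1c e1i pc0 pc1 by blast
qed


end
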